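(* Let $\Omega\subset\mathbb{R}^d$ be a bounded domain, $\sigma$, $u_*$, $F$ and $a$ as in the context, and $\varphi_0\in C^1(\overline{\Omega})$. Let $(v,\varphi)$ be a weak solution of the system $$\nabla\cdot(a(v)\nabla\varphi)=0,\qquad \nabla\cdot(a(v)\nabla v)+a(v)|\nabla\varphi|^2=0\quad\text{in }\Omega,$$ with $\frac{\partial v}{\partial n}+\frac{\beta}{a(v)}(F^{-1}(v)-u_1)=0$ on $\Gamma_R$, $v=F(u_0)$ on $\Gamma_D$, $\varphi=\varphi_0$ on $\partial\Omega$, and let $\psi:=(\varphi-\varphi_0)^2+v$. Then, in the weak sense in $\Omega$, $$\nabla\cdot(a(v)\nabla\psi)=a(v)|\nabla\varphi|^2-2\nabla\cdot\big((\varphi-\varphi_0)a(v)\nabla\varphi_0\big)-2a(v)\nabla\varphi\cdot\nabla\varphi_0,$$ and moreover $$-\nabla\cdot(a(v)\nabla\psi)\le a(v)|\nabla\varphi_0|^2+2\nabla\cdot\big((\varphi-\varphi_0)a(v)\nabla\varphi_0\big).$$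
   Context: $\sigma\in C^1([0,\infty))$ is nonnegative, $u_*\in(0,\infty]$, $\sigma(s)=0$ for $s\ge u_*$, $\sigma>0$ and monotone decreasing on $[0,u_* )$, $\|\sigma\|_{C^1([0,u_*])}\le\mu<\infty$, and $\int_0^{u_*}ds/\sigma(s)=\infty$. $F(u):=\int_0^u\frac{ds}{\sigma(s)}$ maps $[0,u_* )$ onto $[0,\infty)$, and $a(v):=\sigma(F^{-1}(v))$ for $v\ge0$. The boundary $\partial\Omega=\overline{\Gamma_D}\cup\overline{\Gamma_R}$, $\beta\ge0$ is a bounded function on $\Gamma_R$, $u_0,u_1$ are given nonnegative data, $n$ the outward unit normal. The differential identities are understood in the weak (integrated against test functions) sense. *)

theory Defs
  imports "HOL-Analysis.Analysis"
begin

text \<open>u_* ranges over (0, infinity], represented as an extended real.\<close>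

definition sigma_hyps :: "(real \<Rightarrow> real) \<Rightarrow> ereal \<Rightarrow> real \<Rightarrow> bool" where
  "sigma_hyps \<sigma> ustar \<mu> \<longleftrightarrow>
     0 < ustar \<and>
     (\<exists>\<sigma>'. continuous_on {0..} \<sigma>' \<and>
           (\<forall>s\<ge>0. (\<sigma> has_real_derivative \<sigma>' s) (at s within {0..})) \<and>
           (\<forall>s. 0 \<le> s \<and> ereal s \<le> ustar \<longrightarrow> \<bar>\<sigma> s\<bar> \<le> \<mu> \<and> \<bar>\<sigma>' s\<bar> \<le> \<mu>)) \<and>
     (\<forall>s\<ge>0. 0 \<le> \<sigma> s) \<and>
     (\<forall>s\<ge>0. ustar \<le> ereal s \<longrightarrow> \<sigma> s = 0) \<and>
     (\<forall>s\<ge>0. ereal s < ustar \<longrightarrow> 0 < \<sigma> s) \<and>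
     (\<forall>s t. 0 \<le> s \<and> s \<le> t \<and> ereal t < ustar \<longrightarrow> \<sigma> t \<le> \<sigma> s) \<and>
     (\<integral>\<^sup>+ s. indicator {s. 0 \<le> s \<and> ereal s < ustar} s * ennreal (1 / \<sigma> s) \<partial>lborel) = \<infinity>"

definition F_of :: "(real \<Rightarrow> real) \<Rightarrow> real \<Rightarrow> real" where
  "F_of \<sigma> u = (LBINT s=0..u. 1 / \<sigma> s)"

definition a_of :: "(real \<Rightarrow> real) \<Rightarrow> ereal \<Rightarrow> real \<Rightarrow> real" where
  "a_of \<sigma> ustar v = \<sigma> (the_inv_into {u. 0 \<le> u \<and> ereal u < ustar} (F_of \<sigma>) v)"

coinductive smooth_fun :: "('a::euclidean_space \<Rightarrow> real) \<Rightarrow> bool" where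
  "\<lbrakk> \<zeta> differentiable_on UNIV;
     \<forall>b\<in>Basis. smooth_fun (\<lambda>x. frechet_derivative \<zeta> (at x) b) \<rbrakk> \<Longrightarrow> smooth_fun \<zeta>"

definition grad :: "('a::euclidean_space \<Rightarrow> real) \<Rightarrow> 'a \<Rightarrow> 'a" where
  "grad \<zeta> x = (\<Sum>b\<in>Basis. frechet_derivative \<zeta> (at x) b *\<^sub>R b)"

definition test_fun :: "'a::euclidean_space set \<Rightarrow> ('a \<Rightarrow> real) \<Rightarrow> bool" where
  "test_fun \<Omega> \<zeta> \<longleftrightarrow> smooth_fun \<zeta> \<and> compact (closure {x. \<zeta> x \<noteq> 0}) \<and>
      closure {x. \<zeta> x \<noteq> 0} \<subseteq> \<Omega>"

definition weak_grad :: "'a::euclidean_space set \<Rightarrow> ('a \<Rightarrow> real) \<Rightarrow> ('a \<Rightarrow> 'a) \<Rightarrow> bool" where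
  "weak_grad \<Omega> f g \<longleftrightarrow>
     (\<forall>\<zeta>. test_fun \<Omega> \<zeta> \<longrightarrow>
        integrable (lebesgue_on \<Omega>) (\<lambda>x. f x *\<^sub>R grad \<zeta> x) \<and>
        integrable (lebesgue_on \<Omega>) (\<lambda>x. \<zeta> x *\<^sub>R g x) \<and>
        (\<integral>x. f x *\<^sub>R grad \<zeta> x \<partial>lebesgue_on \<Omega>) = - (\<integral>x. \<zeta> x *\<^sub>R g x \<partial>lebesgue_on \<Omega>))"

definition L2_on :: "'a::euclidean_space set \<Rightarrow> ('a \<Rightarrow> 'b::real_normed_vector) \<Rightarrow> bool" where
  "L2_on \<Omega> f \<longleftrightarrow> f \<in> borel_measurable (lebesgue_on \<Omega>) \<and>
     integrable (lebesgue_on \<Omega>) (\<lambda>x. (norm (f x))\<^sup>2)"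

definition H1_with_grad :: "'a::euclidean_space set \<Rightarrow> ('a \<Rightarrow> real) \<Rightarrow> ('a \<Rightarrow> 'a) \<Rightarrow> bool" where
  "H1_with_grad \<Omega> f g \<longleftrightarrow> L2_on \<Omega> f \<and> L2_on \<Omega> g \<and> weak_grad \<Omega> f g"

text \<open>f in H^1_0(Omega): H^1-limit of test functions (zero boundary trace).\<close>
definition H10_with_grad :: "'a::euclidean_space set \<Rightarrow> ('a \<Rightarrow> real) \<Rightarrow> ('a \<Rightarrow> 'a) \<Rightarrow> bool" where
  "H10_with_grad \<Omega> f g \<longleftrightarrow> H1_with_grad \<Omega> f g \<and>
     (\<exists>\<zeta>::nat \<Rightarrow> 'a \<Rightarrow> real. (\<forall>n. test_fun \<Omega> (\<zeta> n)) \<and>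
        (\<lambda>n. (\<integral>x. (\<zeta> n x - f x)\<^sup>2 + (norm (grad (\<zeta> n) x - g x))\<^sup>2 \<partial>lebesgue_on \<Omega>))
          \<longlonglongrightarrow> 0)"

definition C1_closure_with_grad :: "'a::euclidean_space set \<Rightarrow> ('a \<Rightarrow> real) \<Rightarrow> ('a \<Rightarrow> 'a) \<Rightarrow> bool" where
  "C1_closure_with_grad \<Omega> f Df \<longleftrightarrow> continuous_on (closure \<Omega>) f \<and> continuous_on (closure \<Omega>) Df \<and>
     (\<forall>x\<in>\<Omega>. (f has_derivative (\<lambda>h. Df x \<bullet> h)) (at x))"

end

theory Submission
  imports Defs
begin


context
  fixes \<sigma> :: "real \<Rightarrow> real" and ustar :: ereal and \<mu> :: real
  assumes sig: "sigma_hyps \<sigma> ustar \<mu>"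
begin

definition "AA = {u. 0 \<le> u \<and> ereal u < ustar}"

lemma sig_parts:
  obtains \<sigma>' where "0 < ustar" "continuous_on {0..} \<sigma>'"
    "\<And>s. s \<ge> 0 \<Longrightarrow> (\<sigma> has_real_derivative \<sigma>' s) (at s within {0..})"
    "\<And>s. 0 \<le> s \<Longrightarrow> ereal s \<le> ustar \<Longrightarrow> \<bar>\<sigma> s\<bar> \<le> \<mu> \<and> \<bar>\<sigma>' s\<bar> \<le> \<mu>"
    "\<And>s. s \<ge> 0 \<Longrightarrow> ustar \<le> ereal s \<Longrightarrow> \<sigma> s = 0"
    "\<And>s. s \<ge> 0 \<Longrightarrow> ereal s < ustar \<Longrightarrow> 0 < \<sigma> s"
proof -
  note h = sig[unfolded sigma_hyps_def]
  from h obtain \<sigma>' where h2: "continuous_on {0..} \<sigma>'"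
    "\<forall>s\<ge>0. (\<sigma> has_real_derivative \<sigma>' s) (at s within {0..})"
    "\<forall>s. 0 \<le> s \<and> ereal s \<le> ustar \<longrightarrow> \<bar>\<sigma> s\<bar> \<le> \<mu> \<and> \<bar>\<sigma>' s\<bar> \<le> \<mu>"
    by (elim conjE exE) (intro that conjI)
  show ?thesis
    apply (rule that[of \<sigma>'])
    using h h2 by simp_all
qed

lemma sig_cont: "continuous_on {0..} \<sigma>"
proof -
  obtain \<sigma>' where d: "\<And>s. s \<ge> 0 \<Longrightarrow> (\<sigma> has_real_derivative \<sigma>' s) (at s within {0..})"
    using sig_parts by metis
  show ?thesis unfolding continuous_on_eq_continuous_within
  proof
    fix s :: real assume "s \<in> {0..}"
    then show "continuous (at s within {0..}) \<sigma>" using d[of s] DERIV_continuous by auto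
  qed
qed

lemma ustar_pos: "0 < ustar"
  using sig unfolding sigma_hyps_def by (elim conjE)

lemma sig_pos: "0 \<le> s \<Longrightarrow> ereal s < ustar \<Longrightarrow> 0 < \<sigma> s"
proof -
  have "\<forall>s\<ge>0. ereal s < ustar \<longrightarrow> 0 < \<sigma> s"
    using sig unfolding sigma_hyps_def by (elim conjE)
  then show "0 \<le> s \<Longrightarrow> ereal s < ustar \<Longrightarrow> 0 < \<sigma> s" by simp
qed

lemma sig_zero: "0 \<le> s \<Longrightarrow> ustar \<le> ereal s \<Longrightarrow> \<sigma> s = 0"
proof -
  have "\<forall>s\<ge>0. ustar \<le> ereal s \<longrightarrow> \<sigma> s = 0"
    using sig unfolding sigma_hyps_def by (elim conjE)
  then show "0 \<le> s \<Longrightarrow> ustar \<le> ereal s \<Longrightarrow> \<sigma> s = 0" by simp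
qed

lemma sig_deriv:
  obtains \<sigma>' where "\<And>s. s \<ge> 0 \<Longrightarrow> (\<sigma> has_real_derivative \<sigma>' s) (at s within {0..})"
    "\<And>s. 0 \<le> s \<Longrightarrow> ereal s \<le> ustar \<Longrightarrow> \<bar>\<sigma> s\<bar> \<le> \<mu> \<and> \<bar>\<sigma>' s\<bar> \<le> \<mu>"
proof -
  note h = sig[unfolded sigma_hyps_def]
  from h obtain \<sigma>' where h2: 
    "\<forall>s\<ge>0. (\<sigma> has_real_derivative \<sigma>' s) (at s within {0..})"
    "\<forall>s. 0 \<le> s \<and> ereal s \<le> ustar \<longrightarrow> \<bar>\<sigma> s\<bar> \<le> \<mu> \<and> \<bar>\<sigma>' s\<bar> \<le> \<mu>"
    by (elim conjE exE) (intro that conjI)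
  show ?thesis
    apply (rule that[of \<sigma>'])
    using h2 by simp_all
qed

lemma sig_abs_le: "0 \<le> s \<Longrightarrow> ereal s \<le> ustar \<Longrightarrow> \<bar>\<sigma> s\<bar> \<le> \<mu>"
proof -
  assume a: "0 \<le> s" "ereal s \<le> ustar"
  obtain \<sigma>' where "\<And>s. 0 \<le> s \<Longrightarrow> ereal s \<le> ustar \<Longrightarrow> \<bar>\<sigma> s\<bar> \<le> \<mu> \<and> \<bar>\<sigma>' s\<bar> \<le> \<mu>"
    using sig_deriv by blast
  from this[OF a] show ?thesis by simp
qed

lemma sig_le: "0 \<le> s \<Longrightarrow> ereal s < ustar \<Longrightarrow> \<sigma> s \<le> \<mu>"
proof -
  assume a: "0 \<le> s" "ereal s < ustar"
  have "ereal s \<le> ustar" by (rule less_imp_le[OF a(2)])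
  from sig_abs_le[OF a(1) this] show ?thesis by (rule abs_le_D1)
qed

lemma mu_pos: "0 < \<mu>"
proof -
  have "0 < ustar" by (rule ustar_pos)
  then have "0 < \<sigma> 0" "\<sigma> 0 \<le> \<mu>" using sig_pos[of 0] sig_le[of 0] by (auto simp: zero_ereal_def)
  then show ?thesis by linarith
qed

lemma g_cont: "u \<in> AA \<Longrightarrow> continuous_on {0..u} (\<lambda>s. 1 / \<sigma> s)"
proof -
  assume u: "u \<in> AA"
  have "continuous_on {0..u} \<sigma>" by (rule continuous_on_subset[OF sig_cont]) auto
  moreover have "\<forall>x\<in>{0..u}. \<sigma> x \<noteq> 0"
  proof
    fix x assume "x \<in> {0..u}"
    with u have "0 \<le> x" "ereal x < ustar" unfolding AA_def by (auto intro: le_less_trans[of "ereal x" "ereal u"])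
    from sig_pos[OF this] show "\<sigma> x \<noteq> 0" by simp
  qed
  ultimately show ?thesis by (intro continuous_on_divide continuous_on_const)
qed

lemma F_int: "u \<in> AA \<Longrightarrow> F_of \<sigma> u = integral {0..u} (\<lambda>s. 1 / \<sigma> s)"
  unfolding F_of_def zero_ereal_def
  apply (rule interval_integral_eq_integral)
   apply (simp add: AA_def)
  apply (rule borel_integrable_atLeastAtMost')
  by (rule g_cont)

lemma AA_down: "u \<in> AA \<Longrightarrow> 0 \<le> s \<Longrightarrow> s \<le> u \<Longrightarrow> s \<in> AA"
  unfolding AA_def by (auto intro: le_less_trans[of "ereal s" "ereal u"])

lemma F_incr: "x \<in> AA \<Longrightarrow> x' \<in> AA \<Longrightarrow> x \<le> x' \<Longrightarrow> F_of \<sigma> x' - F_of \<sigma> x \<ge> (x' - x) / \<mu>"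
proof -
  assume x: "x \<in> AA" and x': "x' \<in> AA" and le: "x \<le> x'"
  have x0: "0 \<le> x" using x by (simp add: AA_def)
  have int: "(\<lambda>s. 1 / \<sigma> s) integrable_on {0..x'}" using g_cont[OF x'] integrable_continuous_real by blast
  have "integral {0..x} (\<lambda>s. 1 / \<sigma> s) + integral {x..x'} (\<lambda>s. 1 / \<sigma> s) = integral {0..x'} (\<lambda>s. 1 / \<sigma> s)"
    by (rule Henstock_Kurzweil_Integration.integral_combine[OF x0 le int])
  moreover have "integral {x..x'} (\<lambda>s. 1 / \<mu>) \<le> integral {x..x'} (\<lambda>s. 1 / \<sigma> s)"
  proof (rule integral_le)
    show "(\<lambda>s. 1 / \<sigma> s) integrable_on {x..x'}"
      using integrable_on_subinterval[OF int] x0 by auto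
    show "(\<lambda>s. 1 / \<mu>) integrable_on {x..x'}" by (rule integrable_const_ivl)
    fix s assume "s \<in> {x..x'}"
    then have "s \<in> AA" using AA_down[OF x'] x0 by auto
    then have "0 < \<sigma> s" "\<sigma> s \<le> \<mu>" using sig_pos sig_le by (auto simp: AA_def)
    then show "1 / \<mu> \<le> 1 / \<sigma> s" by (simp add: frac_le)
  qed
  moreover have "integral {x..x'} (\<lambda>s. 1 / \<mu>) = (x' - x) / \<mu>" using le by simp
  ultimately show ?thesis using F_int[OF x] F_int[OF x'] by linarith
qed

lemma F_zero: "F_of \<sigma> 0 = 0"
  unfolding F_of_def zero_ereal_def by (rule interval_integral_endpoints_same)

lemma zero_AA: "0 \<in> AA"
  using ustar_pos unfolding AA_def by (simp add: zero_ereal_def)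

lemma F_nonneg: "x \<in> AA \<Longrightarrow> x / \<mu> \<le> F_of \<sigma> x"
  using F_incr[OF zero_AA, of x] by (simp add: F_zero AA_def)

lemma F_cont: "u \<in> AA \<Longrightarrow> continuous_on {0..u} (F_of \<sigma>)"
proof -
  assume u: "u \<in> AA"
  have "continuous_on {0..u} (\<lambda>x. integral {0..x} (\<lambda>s. 1 / \<sigma> s))"
    by (rule indefinite_integral_continuous_1[OF integrable_continuous_real[OF g_cont[OF u]]])
  then show ?thesis
    by (rule continuous_on_eq) (use F_int AA_down[OF u] in auto)
qed


lemma F_strict: "x \<in> AA \<Longrightarrow> x' \<in> AA \<Longrightarrow> x < x' \<Longrightarrow> F_of \<sigma> x < F_of \<sigma> x'"
proof -
  assume a: "x \<in> AA" "x' \<in> AA" "x < x'"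
  have "(x' - x) / \<mu> > 0" using a(3) mu_pos by simp
  with F_incr[OF a(1,2)] a(3) show ?thesis by linarith
qed

lemma F_inj: "inj_on (F_of \<sigma>) AA"
proof (rule inj_onI)
  fix x y assume "x \<in> AA" "y \<in> AA" "F_of \<sigma> x = F_of \<sigma> y"
  then show "x = y" using F_strict[of x y] F_strict[of y x] by (cases x y rule: linorder_cases) auto
qed

lemma sig_lip:
  assumes r: "ustar = ereal r" and s: "0 \<le> s" "s \<le> r"
  shows "\<sigma> s \<le> \<mu> * (r - s)"
proof -
  obtain \<sigma>' where d: "\<And>s. s \<ge> 0 \<Longrightarrow> (\<sigma> has_real_derivative \<sigma>' s) (at s within {0..})"
    and b: "\<And>s. 0 \<le> s \<Longrightarrow> ereal s \<le> ustar \<Longrightarrow> \<bar>\<sigma> s\<bar> \<le> \<mu> \<and> \<bar>\<sigma>' s\<bar> \<le> \<mu>"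
    using sig_deriv by blast
  have "norm (\<sigma> r - \<sigma> s) \<le> \<mu> * norm (r - s)"
  proof (rule field_differentiable_bound[of "{0..r}"])
    show "convex {0..r}" by simp
    fix z assume z: "z \<in> {0..r}"
    show "(\<sigma> has_field_derivative \<sigma>' z) (at z within {0..r})"
      using z by (intro DERIV_subset[OF d]) auto
    show "norm (\<sigma>' z) \<le> \<mu>" using b[of z] z r by auto
  next
    show "r \<in> {0..r}" "s \<in> {0..r}" using s by auto
  qed
  moreover have "\<sigma> r = 0" using sig_zero[of r] r s by auto
  ultimately show ?thesis using s by simp
qed

lemma F_unbounded: "0 \<le> y \<Longrightarrow> \<exists>x\<in>AA. y \<le> F_of \<sigma> x"
proof -
  assume y: "0 \<le> y"
  show ?thesis
  proof (cases ustar)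
    case PInf
    have "y * \<mu> \<in> AA" unfolding AA_def using y mu_pos PInf by simp
    moreover have "y \<le> F_of \<sigma> (y * \<mu>)" using F_nonneg[OF \<open>y * \<mu> \<in> AA\<close>] mu_pos by simp
    ultimately show ?thesis by blast
  next
    case MInf
    then show ?thesis using ustar_pos by simp
  next
    case (real r)
    have r0: "0 < r" using ustar_pos real by (simp add: zero_ereal_def)
    define x where "x = r - r * exp (- \<mu> * y)"
    have ex: "0 < exp (- \<mu> * y)" "exp (- \<mu> * y) \<le> 1" using y mu_pos by auto
    have x0: "0 \<le> x" using ex r0 by (simp add: x_def mult_le_cancel_left1)
    have xr: "x < r" using ex r0 by (simp add: x_def)
    have xA: "x \<in> AA" unfolding AA_def using x0 xr real by simp
    have hi: "((\<lambda>s. 1 / (\<mu> * (r - s))) has_integral ((- ln (r - x) / \<mu>) - (- ln (r - 0) / \<mu>))) {0..x}"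
    proof (rule fundamental_theorem_of_calculus[OF x0])
      fix t assume t: "t \<in> {0..x}"
      then have "t < r" using xr by auto
      have "((\<lambda>s. - ln (r - s) / \<mu>) has_real_derivative 1 / (\<mu> * (r - t))) (at t within {0..x})"
        using \<open>t < r\<close> mu_pos by (auto intro!: derivative_eq_intros simp: field_simps)
      then show "((\<lambda>s. - ln (r - s) / \<mu>) has_vector_derivative 1 / (\<mu> * (r - t))) (at t within {0..x})"
        by (simp add: has_real_derivative_iff_has_vector_derivative)
    qed
    have "ln (r - x) = ln r - \<mu> * y" using r0 by (simp add: x_def ln_mult)
    then have val: "(- ln (r - x) / \<mu>) - (- ln (r - 0) / \<mu>) = y" using mu_pos by (simp add: field_simps)
    have "y \<le> integral {0..x} (\<lambda>s. 1 / \<sigma> s)"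
    proof -
      have "y = integral {0..x} (\<lambda>s. 1 / (\<mu> * (r - s)))" using hi val by (simp add: integral_unique)
      also have "\<dots> \<le> integral {0..x} (\<lambda>s. 1 / \<sigma> s)"
      proof (rule integral_le)
        show "(\<lambda>s. 1 / (\<mu> * (r - s))) integrable_on {0..x}" using hi by blast
        show "(\<lambda>s. 1 / \<sigma> s) integrable_on {0..x}" using g_cont[OF xA] integrable_continuous_real by blast
        fix s assume s: "s \<in> {0..x}"
        then have "s \<in> AA" using AA_down[OF xA] by auto
        then have "0 < \<sigma> s" using sig_pos by (auto simp: AA_def)
        moreover have "\<sigma> s \<le> \<mu> * (r - s)" using sig_lip[OF real, of s] s xr by auto
        ultimately show "1 / (\<mu> * (r - s)) \<le> 1 / \<sigma> s" by (simp add: frac_le)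
      qed
      finally show ?thesis .
    qed
    then have "y \<le> F_of \<sigma> x" using F_int[OF xA] by simp
    then show ?thesis using xA by blast
  qed
qed

lemma F_surj: "0 \<le> y \<Longrightarrow> y \<in> F_of \<sigma> ` AA"
proof -
  assume y: "0 \<le> y"
  obtain x where x: "x \<in> AA" "y \<le> F_of \<sigma> x" using F_unbounded[OF y] by blast
  have "\<exists>t. 0 \<le> t \<and> t \<le> x \<and> F_of \<sigma> t = y"
    by (rule IVT') (use y x F_zero F_cont[OF x(1)] in \<open>auto simp: AA_def\<close>)
  then obtain t where "0 \<le> t" "t \<le> x" "F_of \<sigma> t = y" by blast
  then show ?thesis using AA_down[OF x(1)] by force
qed

definition "GG y = the_inv_into AA (F_of \<sigma>) y"

lemma GG: "0 \<le> y \<Longrightarrow> GG y \<in> AA \<and> F_of \<sigma> (GG y) = y"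
proof -
  assume "0 \<le> y"
  then have y: "y \<in> F_of \<sigma> ` AA" by (rule F_surj)
  show ?thesis unfolding GG_def
    using the_inv_into_into[OF F_inj y subset_refl] f_the_inv_into_f[OF F_inj y] by simp
qed

lemma GG_mono: "0 \<le> y1 \<Longrightarrow> y1 \<le> y2 \<Longrightarrow> GG y1 \<le> GG y2"
proof (rule ccontr)
  assume a: "0 \<le> y1" "y1 \<le> y2" "\<not> GG y1 \<le> GG y2"
  have g1: "GG y1 \<in> AA" "F_of \<sigma> (GG y1) = y1" using GG[of y1] a by auto
  have g2: "GG y2 \<in> AA" "F_of \<sigma> (GG y2) = y2" using GG[of y2] a by auto
  have "F_of \<sigma> (GG y2) < F_of \<sigma> (GG y1)" using F_strict[OF g2(1) g1(1)] a(3) by simp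
  then show False using GG[of y1] GG[of y2] a by auto
qed

lemma a_bounds: "0 \<le> y \<Longrightarrow> 0 < a_of \<sigma> ustar y \<and> a_of \<sigma> ustar y \<le> \<mu>"
proof -
  assume y: "0 \<le> y"
  have "a_of \<sigma> ustar y = \<sigma> (GG y)" unfolding a_of_def GG_def AA_def by simp
  then show ?thesis using GG[OF y] sig_pos sig_le by (auto simp: AA_def)
qed

lemma a_neg: "y < 0 \<Longrightarrow> a_of \<sigma> ustar y = \<sigma> (THE x. False)"
proof -
  assume y: "y < 0"
  have "(\<lambda>u. u \<in> AA \<and> F_of \<sigma> u = y) = (\<lambda>u. False)"
  proof
    fix u show "(u \<in> AA \<and> F_of \<sigma> u = y) = False"
    proof (rule iffI)
      assume h: "u \<in> AA \<and> F_of \<sigma> u = y"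
      then have "0 \<le> u / \<mu>" using mu_pos by (simp add: AA_def)
      then show False using F_nonneg[of u] h y by linarith
    qed simp
  qed
  then show ?thesis unfolding a_of_def the_inv_into_def AA_def[symmetric] by simp
qed

lemma a_meas: "a_of \<sigma> ustar \<in> borel_measurable borel"
proof -
  define Gm where "Gm y = GG (max 0 y)" for y
  define sm where "sm z = \<sigma> (max 0 z)" for z
  have "mono Gm" unfolding Gm_def by (rule monoI) (simp add: GG_mono)
  then have [measurable]: "Gm \<in> borel_measurable borel" by (rule borel_measurable_mono)
  have "continuous_on UNIV sm" unfolding sm_def
    by (rule continuous_on_compose2[OF sig_cont, of UNIV "\<lambda>z. max 0 z"]) (auto intro: continuous_intros)
  then have [measurable]: "sm \<in> borel_measurable borel" by (rule borel_measurable_continuous_onI)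
  have eq: "a_of \<sigma> ustar = (\<lambda>y. if y < 0 then \<sigma> (THE x. False) else sm (Gm y))"
  proof
    fix y show "a_of \<sigma> ustar y = (if y < 0 then \<sigma> (THE x. False) else sm (Gm y))"
    proof (cases "y < 0")
      case True then show ?thesis using a_neg by simp
    next
      case False
      then have "GG y \<in> AA" using GG by simp
      then show ?thesis using False unfolding a_of_def GG_def AA_def sm_def Gm_def by auto
    qed
  qed
  show ?thesis unfolding eq by measurable
qed

end



lemma smooth_diffon: "smooth_fun f \<Longrightarrow> f differentiable_on UNIV"
  by (erule smooth_fun.cases) simp

lemma smooth_dfun: "smooth_fun f \<Longrightarrow> b \<in> Basis \<Longrightarrow> smooth_fun (\<lambda>x. frechet_derivative f (at x) b)"
  by (erule smooth_fun.cases) simp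

lemma smooth_has_deriv: "smooth_fun f \<Longrightarrow> (f has_derivative frechet_derivative f (at x)) (at x)"
proof -
  assume "smooth_fun f"
  then have "f differentiable (at x within UNIV)" using smooth_diffon unfolding differentiable_on_def by blast
  then show ?thesis using frechet_derivative_works by blast
qed

lemma smooth_cont: "smooth_fun f \<Longrightarrow> continuous_on UNIV f"
  by (rule differentiable_imp_continuous_on[OF smooth_diffon])

lemma grad_cont: "smooth_fun f \<Longrightarrow> continuous_on UNIV (grad f)"
proof -
  assume f: "smooth_fun f"
  have "grad f = (\<lambda>x. \<Sum>b\<in>Basis. frechet_derivative f (at x) b *\<^sub>R b)"
    by (rule ext) (simp add: grad_def)
  moreover have "continuous_on UNIV (\<lambda>x. \<Sum>b\<in>Basis. frechet_derivative f (at x) b *\<^sub>R b)"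
  proof (rule continuous_on_sum)
    fix b :: 'a assume b: "b \<in> Basis"
    show "continuous_on UNIV (\<lambda>x. frechet_derivative f (at x) b *\<^sub>R b)"
      by (rule continuous_on_scaleR[OF smooth_cont[OF smooth_dfun[OF f b]] continuous_on_const])
  qed
  ultimately show ?thesis by simp
qed

lemma sumprod_deriv:
  assumes "\<forall>p\<in>set ps. smooth_fun (fst p) \<and> smooth_fun (snd p)"
  shows "((\<lambda>x. \<Sum>p\<leftarrow>ps. fst p x * snd p x) has_derivative
     (\<lambda>h. \<Sum>p\<leftarrow>ps. frechet_derivative (fst p) (at x) h * snd p x + fst p x * frechet_derivative (snd p) (at x) h)) (at x)"
  using assms
proof (induction ps)
  case Nil
  then show ?case by (simp add: has_derivative_const)
next
  case (Cons p ps)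
  have f: "(fst p has_derivative frechet_derivative (fst p) (at x)) (at x)"
    and g: "(snd p has_derivative frechet_derivative (snd p) (at x)) (at x)"
    using Cons.prems smooth_has_deriv by auto
  have "((\<lambda>x. fst p x * snd p x) has_derivative
     (\<lambda>h. fst p x * frechet_derivative (snd p) (at x) h + frechet_derivative (fst p) (at x) h * snd p x)) (at x)"
    by (rule has_derivative_mult[OF f g])
  from has_derivative_add[OF this Cons.IH] Cons.prems show ?case
    by (simp add: algebra_simps)
qed

lemma smooth_sumprod:
  assumes "\<forall>p\<in>set ps. smooth_fun (fst p) \<and> smooth_fun (snd p)"
  shows "smooth_fun (\<lambda>x. \<Sum>p\<leftarrow>ps. fst p x * snd p x)"
  using assms
proof (coinduction arbitrary: ps rule: smooth_fun.coinduct)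
  case (smooth_fun ps)
  let ?h = "\<lambda>x. \<Sum>p\<leftarrow>ps. fst p x * snd p x"
  have Dh: "\<And>x. (?h has_derivative
     (\<lambda>h. \<Sum>p\<leftarrow>ps. frechet_derivative (fst p) (at x) h * snd p x + fst p x * frechet_derivative (snd p) (at x) h)) (at x)"
    using sumprod_deriv[OF smooth_fun] .
  have D: "\<And>x. frechet_derivative ?h (at x) = 
     (\<lambda>h. \<Sum>p\<leftarrow>ps. frechet_derivative (fst p) (at x) h * snd p x + fst p x * frechet_derivative (snd p) (at x) h)"
    using frechet_derivative_at[OF Dh] by simp
  have diff: "?h differentiable_on UNIV"
    unfolding differentiable_on_def differentiable_def using Dh by blast
  have step: "\<exists>ps'. (\<lambda>x. frechet_derivative ?h (at x) b) = (\<lambda>x. \<Sum>p\<leftarrow>ps'. fst p x * snd p x)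
     \<and> (\<forall>p\<in>set ps'. smooth_fun (fst p) \<and> smooth_fun (snd p))" if b: "b \<in> Basis" for b
  proof (intro exI conjI)
    let ?ps' = "map (\<lambda>p. (\<lambda>x. frechet_derivative (fst p) (at x) b, snd p)) ps @ map (\<lambda>p. (fst p, \<lambda>x. frechet_derivative (snd p) (at x) b)) ps"
    show "(\<lambda>x. frechet_derivative ?h (at x) b) = (\<lambda>x. \<Sum>p\<leftarrow>?ps'. fst p x * snd p x)"
      by (rule ext) (simp add: D sum_list_addf o_def)
    show "\<forall>p\<in>set ?ps'. smooth_fun (fst p) \<and> smooth_fun (snd p)"
      using smooth_fun smooth_dfun[OF _ b] by auto
  qed
  show ?case apply (rule exI[of _ ?h]) using diff step by simp
qed


lemma smooth_mult: "smooth_fun f \<Longrightarrow> smooth_fun g \<Longrightarrow> smooth_fun (\<lambda>x. f x * g x)"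
  using smooth_sumprod[of "[(f, g)]"] by simp

lemma grad_mult:
  assumes f: "smooth_fun f" and g: "smooth_fun g"
  shows "grad (\<lambda>x. f x * g x) x = f x *\<^sub>R grad g x + g x *\<^sub>R grad f x"
proof -
  have "((\<lambda>x. f x * g x) has_derivative
     (\<lambda>h. f x * frechet_derivative g (at x) h + frechet_derivative f (at x) h * g x)) (at x)"
    by (rule has_derivative_mult[OF smooth_has_deriv[OF f] smooth_has_deriv[OF g]])
  then have D: "frechet_derivative (\<lambda>x. f x * g x) (at x) =
     (\<lambda>h. f x * frechet_derivative g (at x) h + frechet_derivative f (at x) h * g x)"
    by (rule frechet_derivative_at[symmetric])
  show ?thesis unfolding grad_def D
    by (simp add: scaleR_add_left sum.distrib scaleR_sum_right algebra_simps)
qed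

lemma test_mult:
  assumes f: "test_fun \<Omega> f" and g: "test_fun \<Omega> g"
  shows "test_fun \<Omega> (\<lambda>x. f x * g x)"
proof -
  have sub: "closure {x. f x * g x \<noteq> 0} \<subseteq> closure {x. f x \<noteq> 0}"
    by (rule closure_mono) auto
  have c: "compact (closure {x. f x \<noteq> 0})" "closure {x. f x \<noteq> 0} \<subseteq> \<Omega>" "smooth_fun f"
    using f unfolding test_fun_def by auto
  have "compact (closure {x. f x \<noteq> 0} \<inter> closure {x. f x * g x \<noteq> 0})"
    by (rule compact_Int_closed[OF c(1)]) simp
  moreover have "closure {x. f x \<noteq> 0} \<inter> closure {x. f x * g x \<noteq> 0} = closure {x. f x * g x \<noteq> 0}"
    using sub by blast
  ultimately have "compact (closure {x. f x * g x \<noteq> 0})" by simp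
  moreover have "smooth_fun (\<lambda>x. f x * g x)"
    using smooth_mult c(3) g unfolding test_fun_def by blast
  ultimately show ?thesis using sub c(2) unfolding test_fun_def by blast
qed

lemma test_bounded:
  assumes t: "test_fun \<Omega> f" and b: "bounded \<Omega>"
  obtains C where "C > 0" "\<And>x. x \<in> \<Omega> \<Longrightarrow> \<bar>f x\<bar> \<le> C \<and> norm (grad f x) \<le> C"
proof -
  have s: "smooth_fun f" using t unfolding test_fun_def by blast
  have K: "compact (closure \<Omega>)" using b by (simp add: compact_closure)
  have "bounded (f ` closure \<Omega>)"
    by (rule compact_imp_bounded[OF compact_continuous_image[OF continuous_on_subset[OF smooth_cont[OF s]] K]]) simp
  then obtain C1 where C1: "\<And>y. y \<in> f ` closure \<Omega> \<Longrightarrow> norm y \<le> C1" unfolding bounded_iff by blast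
  have "bounded (grad f ` closure \<Omega>)"
    by (rule compact_imp_bounded[OF compact_continuous_image[OF continuous_on_subset[OF grad_cont[OF s]] K]]) simp
  then obtain C2 where C2: "\<And>y. y \<in> grad f ` closure \<Omega> \<Longrightarrow> norm y \<le> C2" unfolding bounded_iff by blast
  show ?thesis
  proof (rule that[of "max 1 (max C1 C2)"])
    show "max 1 (max C1 C2) > 0" by simp
    fix x assume "x \<in> \<Omega>"
    then have "x \<in> closure \<Omega>" using closure_subset by blast
    then have "norm (f x) \<le> C1" "norm (grad f x) \<le> C2" using C1 C2 by auto
    then show "\<bar>f x\<bar> \<le> max 1 (max C1 C2) \<and> norm (grad f x) \<le> max 1 (max C1 C2)" by auto
  qed
qed

lemma test_meas:
  assumes t: "test_fun \<Omega> f" and o: "open \<Omega>"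
  shows "f \<in> borel_measurable (lebesgue_on \<Omega>)" "grad f \<in> borel_measurable (lebesgue_on \<Omega>)"
proof -
  have s: "smooth_fun f" using t unfolding test_fun_def by blast
  have L: "\<Omega> \<in> sets lebesgue" using o by (simp add: borel_open sets_completionI_sets)
  show "f \<in> borel_measurable (lebesgue_on \<Omega>)"
    by (rule continuous_imp_measurable_on_sets_lebesgue[OF continuous_on_subset[OF smooth_cont[OF s]] L]) simp
  show "grad f \<in> borel_measurable (lebesgue_on \<Omega>)"
    by (rule continuous_imp_measurable_on_sets_lebesgue[OF continuous_on_subset[OF grad_cont[OF s]] L]) simp
qed




definition sqi :: "'x measure \<Rightarrow> ('x \<Rightarrow> 'b::real_normed_vector) \<Rightarrow> bool" where
  "sqi M f \<longleftrightarrow> f \<in> borel_measurable M \<and> integrable M (\<lambda>x. (norm (f x))\<^sup>2)"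

lemma sqi_meas: "sqi M f \<Longrightarrow> f \<in> borel_measurable M"
  by (simp add: sqi_def)

lemma sqi_int: "sqi M f \<Longrightarrow> integrable M (\<lambda>x. (norm (f x))\<^sup>2)"
  by (simp add: sqi_def)

lemma two_ab: "2 * (\<bar>a\<bar> * \<bar>b\<bar>) \<le> a\<^sup>2 + (b::real)\<^sup>2"
proof -
  have "0 \<le> (\<bar>a\<bar> - \<bar>b\<bar>)\<^sup>2" by simp
  also have "\<dots> = a\<^sup>2 + b\<^sup>2 - 2 * (\<bar>a\<bar> * \<bar>b\<bar>)" by (simp add: power2_diff power2_abs)
  finally show ?thesis by simp
qed

lemma ab_le: "a * b \<le> a\<^sup>2 + (b::real)\<^sup>2"
proof -
  have "a * b \<le> \<bar>a\<bar> * \<bar>b\<bar>" by (metis abs_ge_self abs_mult)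
  moreover have "0 \<le> \<bar>a\<bar> * \<bar>b\<bar>" by simp
  ultimately show ?thesis using two_ab[of a b] by linarith
qed

lemma int_prod:
  fixes F :: "'x \<Rightarrow> 'b::{banach, second_countable_topology}" and p q :: "'x \<Rightarrow> real"
  assumes F: "F \<in> borel_measurable M" and p: "sqi M p" and q: "sqi M q"
    and bd: "AE x in M. norm (F x) \<le> p x * q x"
  shows "integrable M F"
proof (rule Bochner_Integration.integrable_bound[OF _ F])
  show "integrable M (\<lambda>x. (norm (p x))\<^sup>2 + (norm (q x))\<^sup>2)"
    using sqi_int[OF p] sqi_int[OF q] by (rule Bochner_Integration.integrable_add)
  show "AE x in M. norm (F x) \<le> norm ((norm (p x))\<^sup>2 + (norm (q x))\<^sup>2)"
    using bd
  proof eventually_elim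
    case (elim x)
    have "p x * q x \<le> (p x)\<^sup>2 + (q x)\<^sup>2" by (rule ab_le)
    then show ?case using elim by simp
  qed
qed

lemma sqi_norm: "sqi M f \<Longrightarrow> sqi M (\<lambda>x. norm (f x))"
  unfolding sqi_def by (auto intro: borel_measurable_norm)

lemma sqi_add:
  fixes f g :: "'x \<Rightarrow> 'b::{banach, second_countable_topology}"
  assumes f: "sqi M f" and g: "sqi M g"
  shows "sqi M (\<lambda>x. f x + g x)" "sqi M (\<lambda>x. f x - g x)"
proof -
  have fm: "f \<in> borel_measurable M" and gm: "g \<in> borel_measurable M" using f g by (auto simp: sqi_def)
  have I: "integrable M (\<lambda>x. 2 * (norm (f x))\<^sup>2 + 2 * (norm (g x))\<^sup>2)"
    using sqi_int[OF f] sqi_int[OF g] by simp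
  have key: "(norm (u + v))\<^sup>2 \<le> 2 * (norm u)\<^sup>2 + 2 * (norm v)\<^sup>2" "(norm (u - v))\<^sup>2 \<le> 2 * (norm u)\<^sup>2 + 2 * (norm v)\<^sup>2" for u v :: 'b
  proof -
    have a: "norm (u + v) \<le> norm u + norm v" "norm (u - v) \<le> norm u + norm v" by (rule norm_triangle_ineq, rule norm_triangle_ineq4)
    have "(norm u + norm v)\<^sup>2 = (norm u)\<^sup>2 + (norm v)\<^sup>2 + 2 * (\<bar>norm u\<bar> * \<bar>norm v\<bar>)"
      by (simp add: power2_sum)
    then have "(norm u + norm v)\<^sup>2 \<le> 2 * (norm u)\<^sup>2 + 2 * (norm v)\<^sup>2"
      using two_ab[of "norm u" "norm v"] by linarith
    moreover have "(norm (u + v))\<^sup>2 \<le> (norm u + norm v)\<^sup>2" "(norm (u - v))\<^sup>2 \<le> (norm u + norm v)\<^sup>2"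
      using a by (auto intro!: power_mono)
    ultimately show "(norm (u + v))\<^sup>2 \<le> 2 * (norm u)\<^sup>2 + 2 * (norm v)\<^sup>2" "(norm (u - v))\<^sup>2 \<le> 2 * (norm u)\<^sup>2 + 2 * (norm v)\<^sup>2"
      by linarith+
  qed
  show "sqi M (\<lambda>x. f x + g x)" unfolding sqi_def
  proof
    show "(\<lambda>x. f x + g x) \<in> borel_measurable M" using fm gm by measurable
    show "integrable M (\<lambda>x. (norm (f x + g x))\<^sup>2)"
      by (rule Bochner_Integration.integrable_bound[OF I]) (use fm gm key in auto)
  qed
  show "sqi M (\<lambda>x. f x - g x)" unfolding sqi_def
  proof
    show "(\<lambda>x. f x - g x) \<in> borel_measurable M" using fm gm by measurable
    show "integrable M (\<lambda>x. (norm (f x - g x))\<^sup>2)"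
      by (rule Bochner_Integration.integrable_bound[OF I]) (use fm gm key in auto)
  qed
qed

lemma sqi_scale:
  fixes f :: "'x \<Rightarrow> 'b::{banach, second_countable_topology}"
  assumes f: "sqi M f" and b: "b \<in> borel_measurable M" and C: "AE x in M. \<bar>b x\<bar> \<le> C"
  shows "sqi M (\<lambda>x. b x *\<^sub>R f x)"
  unfolding sqi_def
proof
  have fm: "f \<in> borel_measurable M" using f by (simp add: sqi_def)
  show "(\<lambda>x. b x *\<^sub>R f x) \<in> borel_measurable M" using fm b by measurable
  show "integrable M (\<lambda>x. (norm (b x *\<^sub>R f x))\<^sup>2)"
  proof (rule Bochner_Integration.integrable_bound)
    show "integrable M (\<lambda>x. C\<^sup>2 * (norm (f x))\<^sup>2)" using sqi_int[OF f] by simp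
    show "(\<lambda>x. (norm (b x *\<^sub>R f x))\<^sup>2) \<in> borel_measurable M" using fm b by measurable
    show "AE x in M. norm ((norm (b x *\<^sub>R f x))\<^sup>2) \<le> norm (C\<^sup>2 * (norm (f x))\<^sup>2)"
      using C
    proof eventually_elim
      case (elim x)
      have "\<bar>b x\<bar>\<^sup>2 \<le> C\<^sup>2" using elim by (intro power_mono) auto
      then have "\<bar>b x\<bar>\<^sup>2 * (norm (f x))\<^sup>2 \<le> C\<^sup>2 * (norm (f x))\<^sup>2" by (intro mult_right_mono) auto
      then show ?case by (simp add: power_mult_distrib)
    qed
  qed
qed

lemma sqi_mult:
  fixes f b :: "'x \<Rightarrow> real"
  assumes f: "sqi M f" and b: "b \<in> borel_measurable M" and C: "AE x in M. \<bar>b x\<bar> \<le> C"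
  shows "sqi M (\<lambda>x. b x * f x)"
  using sqi_scale[OF assms] by simp

lemma sqi_bounded:
  fixes f :: "'x \<Rightarrow> 'b::{banach, second_countable_topology}"
  assumes fin: "finite_measure M" and f: "f \<in> borel_measurable M" and C: "AE x in M. norm (f x) \<le> C"
  shows "sqi M f"
  unfolding sqi_def
proof
  show "f \<in> borel_measurable M" by fact
  show "integrable M (\<lambda>x. (norm (f x))\<^sup>2)"
  proof (rule finite_measure.integrable_const_bound[OF fin, where B = "C\<^sup>2"])
    show "AE x in M. norm ((norm (f x))\<^sup>2) \<le> C\<^sup>2"
      using C by eventually_elim (auto intro: power_mono)
    show "(\<lambda>x. (norm (f x))\<^sup>2) \<in> borel_measurable M" using f by measurable
  qed
qed

lemma sqi_const: "finite_measure M \<Longrightarrow> sqi M (\<lambda>x. c::real)"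
  by (rule sqi_bounded[where C = "\<bar>c\<bar>"]) auto


lemma int_abs_prod_lim:
  fixes s :: "nat \<Rightarrow> 'x \<Rightarrow> real" and k :: "'x \<Rightarrow> real"
  assumes s: "\<And>n. sqi M (s n)" and sl: "(\<lambda>n. \<integral>x. (s n x)\<^sup>2 \<partial>M) \<longlonglongrightarrow> 0"
    and k: "sqi M k"
  shows "(\<lambda>n. \<integral>x. \<bar>s n x\<bar> * \<bar>k x\<bar> \<partial>M) \<longlonglongrightarrow> 0"
proof (rule LIMSEQ_I)
  fix r :: real assume r: "0 < r"
  define K where "K = (\<integral>x. (k x)\<^sup>2 \<partial>M)"
  have K0: "0 \<le> K" unfolding K_def by simp
  define d where "d = r / (K + 1)"
  have d0: "0 < d" using r K0 by (simp add: d_def)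
  have dK: "d * K < r"
  proof -
    have "d * K = r * (K / (K + 1))" by (simp add: d_def)
    also have "\<dots> < r * 1" using r K0 by (intro mult_strict_left_mono) auto
    finally show ?thesis by simp
  qed
  obtain no where no: "\<And>n. n \<ge> no \<Longrightarrow> norm ((\<integral>x. (s n x)\<^sup>2 \<partial>M) - 0) < d * r"
    using LIMSEQ_D[OF sl, of "d * r"] d0 r by auto
  show "\<exists>no. \<forall>n\<ge>no. norm ((\<integral>x. \<bar>s n x\<bar> * \<bar>k x\<bar> \<partial>M) - 0) < r"
  proof (intro exI allI impI)
    fix n assume n: "no \<le> n"
    have sm: "s n \<in> borel_measurable M" and km: "k \<in> borel_measurable M" using s k by (auto simp: sqi_def)
    have Is: "integrable M (\<lambda>x. (s n x)\<^sup>2)" using sqi_int[OF s[of n]] by simp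
    have Ik: "integrable M (\<lambda>x. (k x)\<^sup>2)" using sqi_int[OF k] by simp
    have Ib: "integrable M (\<lambda>x. ((s n x)\<^sup>2 / d + d * (k x)\<^sup>2) / 2)"
      using Is Ik by simp
    have pw: "\<bar>s n x\<bar> * \<bar>k x\<bar> \<le> ((s n x)\<^sup>2 / d + d * (k x)\<^sup>2) / 2" for x
    proof -
      have "0 \<le> (\<bar>s n x\<bar> - d * \<bar>k x\<bar>)\<^sup>2" by simp
      also have "\<dots> = (s n x)\<^sup>2 - 2 * d * (\<bar>s n x\<bar> * \<bar>k x\<bar>) + d\<^sup>2 * (k x)\<^sup>2"
        by (simp add: power2_diff power2_abs power_mult_distrib algebra_simps)
      finally have "2 * d * (\<bar>s n x\<bar> * \<bar>k x\<bar>) \<le> (s n x)\<^sup>2 + d\<^sup>2 * (k x)\<^sup>2" by simp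
      then have "2 * d * (\<bar>s n x\<bar> * \<bar>k x\<bar>) / d \<le> ((s n x)\<^sup>2 + d\<^sup>2 * (k x)\<^sup>2) / d"
        using d0 by (intro divide_right_mono) auto
      then show ?thesis using d0 by (simp add: field_simps power2_eq_square)
    qed
    have Ia: "integrable M (\<lambda>x. \<bar>s n x\<bar> * \<bar>k x\<bar>)"
    proof (rule Bochner_Integration.integrable_bound[OF Ib])
      show "(\<lambda>x. \<bar>s n x\<bar> * \<bar>k x\<bar>) \<in> borel_measurable M" using sm km by measurable
      have "norm (\<bar>s n x\<bar> * \<bar>k x\<bar>) \<le> norm (((s n x)\<^sup>2 / d + d * (k x)\<^sup>2) / 2)" for x
      proof -
        have "norm (\<bar>s n x\<bar> * \<bar>k x\<bar>) = \<bar>s n x\<bar> * \<bar>k x\<bar>" by simp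
        also have "\<dots> \<le> ((s n x)\<^sup>2 / d + d * (k x)\<^sup>2) / 2" by (rule pw)
        also have "\<dots> \<le> norm (((s n x)\<^sup>2 / d + d * (k x)\<^sup>2) / 2)" unfolding real_norm_def by (rule abs_ge_self)
        finally show ?thesis .
      qed
      then show "AE x in M. norm (\<bar>s n x\<bar> * \<bar>k x\<bar>) \<le> norm (((s n x)\<^sup>2 / d + d * (k x)\<^sup>2) / 2)"
        by (intro AE_I2)
    qed
    have "(\<integral>x. \<bar>s n x\<bar> * \<bar>k x\<bar> \<partial>M) \<le> (\<integral>x. ((s n x)\<^sup>2 / d + d * (k x)\<^sup>2) / 2 \<partial>M)"
      by (rule integral_mono[OF Ia Ib pw])
    also have "\<dots> = ((\<integral>x. (s n x)\<^sup>2 \<partial>M) / d + d * K) / 2"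
      using Is Ik by (simp add: K_def)
    also have "\<dots> < r"
    proof -
      have "(\<integral>x. (s n x)\<^sup>2 \<partial>M) < d * r" using no[OF n] by simp
      then have "(\<integral>x. (s n x)\<^sup>2 \<partial>M) / d < r" using d0 by (simp add: divide_less_eq mult.commute)
      then show ?thesis using dK by simp
    qed
    finally have lt: "(\<integral>x. \<bar>s n x\<bar> * \<bar>k x\<bar> \<partial>M) < r" .
    have "0 \<le> (\<integral>x. \<bar>s n x\<bar> * \<bar>k x\<bar> \<partial>M)" by simp
    then show "norm ((\<integral>x. \<bar>s n x\<bar> * \<bar>k x\<bar> \<partial>M) - 0) < r" using lt by simp
  qed
qed

lemma LIMV:
  fixes f :: "nat \<Rightarrow> 'x \<Rightarrow> 'b::{banach, second_countable_topology}"
  assumes fi: "\<And>n. integrable M (f n)" and g: "g \<in> borel_measurable M"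
    and s: "\<And>n. sqi M (s n)" and sl: "(\<lambda>n. \<integral>x. (s n x)\<^sup>2 \<partial>M) \<longlonglongrightarrow> 0"
    and k: "sqi M k" and bd: "\<And>n. AE x in M. norm (f n x - g x) \<le> s n x * k x"
  shows "integrable M g \<and> (\<lambda>n. \<integral>x. f n x \<partial>M) \<longlonglongrightarrow> (\<integral>x. g x \<partial>M)"
proof -
  have sm: "\<And>n. s n \<in> borel_measurable M" and km: "k \<in> borel_measurable M" using s k by (auto simp: sqi_def)
  have fm: "\<And>n. f n \<in> borel_measurable M" using fi by auto
  have di: "integrable M (\<lambda>x. f n x - g x)" for n
  proof (rule int_prod[OF _ s[of n] k bd[of n]])
    show "(\<lambda>x. f n x - g x) \<in> borel_measurable M" using fm[of n] g by measurable
  qed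
  have gi: "integrable M g"
  proof -
    have "integrable M (\<lambda>x. f 0 x - (f 0 x - g x))"
      by (rule Bochner_Integration.integrable_diff[OF fi[of 0] di[of 0]])
    then show ?thesis by simp
  qed
  have ai: "integrable M (\<lambda>x. \<bar>s n x\<bar> * \<bar>k x\<bar>)" for n
    by (rule int_prod[OF _ sqi_norm[OF s[of n]] sqi_norm[OF k]]) (use sm km in auto)
  have le: "norm ((\<integral>x. f n x \<partial>M) - (\<integral>x. g x \<partial>M)) \<le> (\<integral>x. \<bar>s n x\<bar> * \<bar>k x\<bar> \<partial>M)" for n
  proof -
    have "(\<integral>x. f n x \<partial>M) - (\<integral>x. g x \<partial>M) = (\<integral>x. f n x - g x \<partial>M)"
      by (rule Bochner_Integration.integral_diff[OF fi gi, symmetric])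
    then have "norm ((\<integral>x. f n x \<partial>M) - (\<integral>x. g x \<partial>M)) = norm (\<integral>x. f n x - g x \<partial>M)" by simp
    also have "\<dots> \<le> (\<integral>x. norm (f n x - g x) \<partial>M)" by (rule integral_norm_bound)
    also have "\<dots> \<le> (\<integral>x. \<bar>s n x\<bar> * \<bar>k x\<bar> \<partial>M)"
    proof (rule integral_mono_AE)
      show "integrable M (\<lambda>x. norm (f n x - g x))" using di by (rule integrable_norm)
      show "integrable M (\<lambda>x. \<bar>s n x\<bar> * \<bar>k x\<bar>)" by (rule ai)
      show "AE x in M. norm (f n x - g x) \<le> \<bar>s n x\<bar> * \<bar>k x\<bar>"
        using bd[of n] by eventually_elim (metis abs_ge_self abs_mult order_trans)
    qed
    finally show ?thesis .
  qed
  have "(\<lambda>n. (\<integral>x. f n x \<partial>M) - (\<integral>x. g x \<partial>M)) \<longlonglongrightarrow> 0"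
    by (rule Lim_null_comparison[OF always_eventually[OF allI[OF le]] int_abs_prod_lim[OF s sl k]])
  then have "(\<lambda>n. \<integral>x. f n x \<partial>M) \<longlonglongrightarrow> (\<integral>x. g x \<partial>M)" by (rule LIM_zero_cancel)
  with gi show ?thesis by simp
qed



lemma bndA:
  fixes a E :: "'b::real_normed_vector"
  assumes h: "\<bar>\<eta>\<bar> \<le> C" "norm a \<le> C" "\<bar>e\<bar> \<le> s" "norm E \<le> s"
  shows "norm ((w * e) *\<^sub>R a + (w * \<eta>) *\<^sub>R E) \<le> s * (2 * C * \<bar>w\<bar>)"
proof -
  have t: "norm ((w * e) *\<^sub>R a + (w * \<eta>) *\<^sub>R E) \<le> norm ((w * e) *\<^sub>R a) + norm ((w * \<eta>) *\<^sub>R E)"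
    by (rule norm_triangle_ineq)
  have e1: "norm ((w * e) *\<^sub>R a) = \<bar>w\<bar> * (\<bar>e\<bar> * norm a)" by (simp add: abs_mult)
  have e2: "norm ((w * \<eta>) *\<^sub>R E) = \<bar>w\<bar> * (\<bar>\<eta>\<bar> * norm E)" by (simp add: abs_mult)
  have "\<bar>e\<bar> * norm a \<le> s * C" using h by (intro mult_mono) auto
  then have i1: "\<bar>w\<bar> * (\<bar>e\<bar> * norm a) \<le> \<bar>w\<bar> * (s * C)" by (intro mult_left_mono) auto
  have "\<bar>\<eta>\<bar> * norm E \<le> C * s" using h by (intro mult_mono) auto
  then have i2: "\<bar>w\<bar> * (\<bar>\<eta>\<bar> * norm E) \<le> \<bar>w\<bar> * (C * s)" by (intro mult_left_mono) auto
  have "\<bar>w\<bar> * (s * C) + \<bar>w\<bar> * (C * s) = s * (2 * C * \<bar>w\<bar>)" by (simp add: algebra_simps)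
  then show ?thesis using t e1 e2 i1 i2 by linarith
qed

lemma bndB:
  fixes D :: "'b::real_normed_vector"
  assumes h: "\<bar>\<eta>\<bar> \<le> C" "\<bar>e\<bar> \<le> s"
  shows "norm ((e * \<eta>) *\<^sub>R D) \<le> s * (C * norm D)"
proof -
  have "norm ((e * \<eta>) *\<^sub>R D) = \<bar>e\<bar> * (\<bar>\<eta>\<bar> * norm D)" by (simp add: abs_mult)
  also have "\<dots> \<le> s * (C * norm D)" using h by (intro mult_mono) (auto intro: mult_right_mono)
  finally show ?thesis .
qed

lemma inner_abs_le: "\<bar>P \<bullet> Q\<bar> \<le> norm P * norm Q"
  by (rule Cauchy_Schwarz_ineq2)

lemma bndC:
  fixes a E P :: "'b::real_inner"
  assumes h: "\<bar>A\<bar> \<le> \<mu>" "norm a \<le> C" "\<bar>z\<bar> \<le> C" "\<bar>e\<bar> \<le> s" "norm E \<le> s"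
  shows "\<bar>A * (P \<bullet> (e *\<^sub>R a + z *\<^sub>R E))\<bar> \<le> s * (2 * \<mu> * C * norm P)"
proof -
  have n: "norm (e *\<^sub>R a + z *\<^sub>R E) \<le> s * (2 * C)"
    using bndA[of z C a "e" s E 1] h by simp
  have "\<bar>P \<bullet> (e *\<^sub>R a + z *\<^sub>R E)\<bar> \<le> norm P * (s * (2 * C))"
    by (rule order_trans[OF inner_abs_le]) (intro mult_left_mono n norm_ge_zero)
  then have "\<bar>A\<bar> * \<bar>P \<bullet> (e *\<^sub>R a + z *\<^sub>R E)\<bar> \<le> \<mu> * (norm P * (s * (2 * C)))"
    using h(1) by (intro mult_mono) auto
  then show ?thesis by (simp only: abs_mult[symmetric]) (simp add: algebra_simps)
qed

lemma bnd4:
  fixes P Q :: "'b::real_inner"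
  assumes "\<bar>A\<bar> \<le> \<mu>" "\<bar>t\<bar> \<le> T" "norm P \<le> PP" "norm Q \<le> QQ"
  shows "\<bar>A * t * (P \<bullet> Q)\<bar> \<le> \<mu> * T * PP * QQ"
proof -
  have "\<bar>P \<bullet> Q\<bar> \<le> PP * QQ"
  proof (rule order_trans[OF inner_abs_le])
    have "0 \<le> PP" using assms(3) norm_ge_zero order_trans by blast
    then show "norm P * norm Q \<le> PP * QQ" using assms by (intro mult_mono) auto
  qed
  moreover have "\<bar>A * t\<bar> \<le> \<mu> * T" unfolding abs_mult using assms by (intro mult_mono) auto
  ultimately have "\<bar>A * t\<bar> * \<bar>P \<bullet> Q\<bar> \<le> (\<mu> * T) * (PP * QQ)"
    by (intro mult_mono) auto
  then show ?thesis by (simp add: abs_mult algebra_simps)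
qed

lemma AE_lebesgue_onI: "(\<And>x. x \<in> S \<Longrightarrow> P x) \<Longrightarrow> AE x in lebesgue_on S. P x"
  by (rule AE_I2) simp

lemma L2_sqi: "L2_on S f \<Longrightarrow> sqi (lebesgue_on S) f"
  by (simp add: L2_on_def sqi_def)

lemma sqi_cnorm: "finite_measure M \<Longrightarrow> sqi M f \<Longrightarrow> sqi M (\<lambda>x. c * norm (f x))"
  by (rule sqi_mult[OF sqi_norm, where C = "\<bar>c\<bar>"]) auto



theorem lemma2p4:
  fixes \<Omega> :: "'a::euclidean_space set"
    and \<sigma> :: "real \<Rightarrow> real" and ustar :: ereal and \<mu> :: real
    and v \<phi> \<phi>0 :: "'a \<Rightarrow> real" and Dv D\<phi> D\<phi>0 :: "'a \<Rightarrow> 'a"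
  assumes dom: "open \<Omega>" "connected \<Omega>" "bounded \<Omega>" "\<Omega> \<noteq> {}"
    and sig: "sigma_hyps \<sigma> ustar \<mu>"
    and phi0: "C1_closure_with_grad \<Omega> \<phi>0 D\<phi>0"
    and v_H1: "H1_with_grad \<Omega> v Dv"
    and v_nonneg: "AE x in lebesgue_on \<Omega>. 0 \<le> v x"
    and phi_H1: "H1_with_grad \<Omega> \<phi> D\<phi>"
    and phi_bc: "H10_with_grad \<Omega> (\<lambda>x. \<phi> x - \<phi>0 x) (\<lambda>x. D\<phi> x - D\<phi>0 x)"
    and eq_phi: "\<And>\<zeta>. test_fun \<Omega> \<zeta> \<Longrightarrow>
        (\<integral>x. a_of \<sigma> ustar (v x) * (D\<phi> x \<bullet> grad \<zeta> x) \<partial>lebesgue_on \<Omega>) = 0"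
    and eq_v: "\<And>\<zeta>. test_fun \<Omega> \<zeta> \<Longrightarrow>
        (\<integral>x. a_of \<sigma> ustar (v x) * (Dv x \<bullet> grad \<zeta> x) \<partial>lebesgue_on \<Omega>)
        = (\<integral>x. a_of \<sigma> ustar (v x) * (norm (D\<phi> x))\<^sup>2 * \<zeta> x \<partial>lebesgue_on \<Omega>)"
  defines "\<psi> \<equiv> (\<lambda>x. (\<phi> x - \<phi>0 x)\<^sup>2 + v x)"
  shows "\<exists>D\<psi>. weak_grad \<Omega> \<psi> D\<psi> \<and>
     (\<forall>\<zeta>. test_fun \<Omega> \<zeta> \<longrightarrow>
        - (\<integral>x. a_of \<sigma> ustar (v x) * (D\<psi> x \<bullet> grad \<zeta> x) \<partial>lebesgue_on \<Omega>)
        = (\<integral>x. (a_of \<sigma> ustar (v x) * (norm (D\<phi> x))\<^sup>2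
                 - 2 * a_of \<sigma> ustar (v x) * (D\<phi> x \<bullet> D\<phi>0 x)) * \<zeta> x \<partial>lebesgue_on \<Omega>)
          + 2 * (\<integral>x. (\<phi> x - \<phi>0 x) * a_of \<sigma> ustar (v x) * (D\<phi>0 x \<bullet> grad \<zeta> x) \<partial>lebesgue_on \<Omega>)) \<and>
     (\<forall>\<zeta>. test_fun \<Omega> \<zeta> \<and> (\<forall>x. 0 \<le> \<zeta> x) \<longrightarrow>
        (\<integral>x. a_of \<sigma> ustar (v x) * (D\<psi> x \<bullet> grad \<zeta> x) \<partial>lebesgue_on \<Omega>)
        \<le> (\<integral>x. a_of \<sigma> ustar (v x) * (norm (D\<phi>0 x))\<^sup>2 * \<zeta> x \<partial>lebesgue_on \<Omega>)
          - 2 * (\<integral>x. (\<phi> x - \<phi>0 x) * a_of \<sigma> ustar (v x) * (D\<phi>0 x \<bullet> grad \<zeta> x) \<partial>lebesgue_on \<Omega>))"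
proof -
  let ?M = "lebesgue_on \<Omega>"
  define A where "A x = a_of \<sigma> ustar (v x)" for x
  define w where "w x = \<phi> x - \<phi>0 x" for x
  define Dw where "Dw x = D\<phi> x - D\<phi>0 x" for x
  have L: "\<Omega> \<in> sets lebesgue" using dom(1) by (simp add: borel_open sets_completionI_sets)
  have fin: "finite_measure ?M"
    by (rule finite_measure_lebesgue_on[OF bounded_set_imp_lmeasurable[OF dom(3) L]])
  have mu: "0 < \<mu>" by (rule mu_pos[OF sig])
  have v_sqi: "sqi ?M v" and Dv_sqi: "sqi ?M Dv" and v_wg: "weak_grad \<Omega> v Dv"
    using v_H1 unfolding H1_with_grad_def by (auto intro: L2_sqi)
  have Dphi_sqi: "sqi ?M D\<phi>" using phi_H1 unfolding H1_with_grad_def by (auto intro: L2_sqi)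
  have w_H1: "H1_with_grad \<Omega> w Dw" and seq: "\<exists>\<zeta>::nat \<Rightarrow> 'a \<Rightarrow> real. (\<forall>n. test_fun \<Omega> (\<zeta> n)) \<and>
        (\<lambda>n. (\<integral>x. (\<zeta> n x - w x)\<^sup>2 + (norm (grad (\<zeta> n) x - Dw x))\<^sup>2 \<partial>?M)) \<longlonglongrightarrow> 0"
    using phi_bc unfolding H10_with_grad_def w_def[abs_def] Dw_def[abs_def] by blast+
  have w_sqi: "sqi ?M w" and Dw_sqi: "sqi ?M Dw" and w_wg: "weak_grad \<Omega> w Dw"
    using w_H1 unfolding H1_with_grad_def by (auto intro: L2_sqi)
  obtain zn :: "nat \<Rightarrow> 'a \<Rightarrow> real" where zn_test: "\<And>n. test_fun \<Omega> (zn n)" and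
    zn_lim: "(\<lambda>n. (\<integral>x. (zn n x - w x)\<^sup>2 + (norm (grad (zn n) x - Dw x))\<^sup>2 \<partial>?M)) \<longlonglongrightarrow> 0"
    using seq by blast
  have wm[measurable]: "w \<in> borel_measurable ?M" using w_sqi by (rule sqi_meas)
  have Dwm[measurable]: "Dw \<in> borel_measurable ?M" using Dw_sqi by (rule sqi_meas)
  have vm[measurable]: "v \<in> borel_measurable ?M" using v_sqi by (rule sqi_meas)
  have Dvm[measurable]: "Dv \<in> borel_measurable ?M" using Dv_sqi by (rule sqi_meas)
  have Dphim[measurable]: "D\<phi> \<in> borel_measurable ?M" using Dphi_sqi by (rule sqi_meas)
  have Am[measurable]: "A \<in> borel_measurable ?M"
    unfolding A_def[abs_def] by (rule measurable_compose[OF vm a_meas[OF sig]])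
  have A_AE: "AE x in ?M. 0 < A x \<and> A x \<le> \<mu>"
    using v_nonneg by eventually_elim (simp add: A_def a_bounds[OF sig])
  have A_abs: "AE x in ?M. \<bar>A x\<bar> \<le> \<mu>"
    using A_AE by eventually_elim simp
  have Dphi0_cont: "continuous_on (closure \<Omega>) D\<phi>0" using phi0 unfolding C1_closure_with_grad_def by blast
  have Dphi0m[measurable]: "D\<phi>0 \<in> borel_measurable ?M"
    by (rule continuous_imp_measurable_on_sets_lebesgue[OF continuous_on_subset[OF Dphi0_cont closure_subset] L])
  obtain C0 where C0: "\<And>x. x \<in> \<Omega> \<Longrightarrow> norm (D\<phi>0 x) \<le> C0"
  proof -
    have "bounded (D\<phi>0 ` closure \<Omega>)"
      by (rule compact_imp_bounded[OF compact_continuous_image[OF Dphi0_cont]]) (simp add: compact_closure dom(3))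
    then obtain C where "\<And>y. y \<in> D\<phi>0 ` closure \<Omega> \<Longrightarrow> norm y \<le> C" unfolding bounded_iff by blast
    then show ?thesis using that closure_subset by blast
  qed
  have Dphi0_sqi: "sqi ?M D\<phi>0"
    by (rule sqi_bounded[OF fin Dphi0m, where C = C0]) (rule AE_lebesgue_onI, rule C0)
  define sn where "sn n x = sqrt ((zn n x - w x)\<^sup>2 + (norm (grad (zn n) x - Dw x))\<^sup>2)" for n x
  have znm[measurable]: "zn n \<in> borel_measurable ?M" "grad (zn n) \<in> borel_measurable ?M" for n
    using test_meas[OF zn_test dom(1)] by auto
  have zn_sqi: "sqi ?M (zn n)" "sqi ?M (grad (zn n))" for n
  proof -
    obtain C where C: "C > 0" "\<And>x. x \<in> \<Omega> \<Longrightarrow> \<bar>zn n x\<bar> \<le> C \<and> norm (grad (zn n) x) \<le> C"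
      using test_bounded[OF zn_test dom(3)] by blast
    show "sqi ?M (zn n)" by (rule sqi_bounded[OF fin znm(1), where C = C]) (rule AE_lebesgue_onI, use C in simp)
    show "sqi ?M (grad (zn n))" by (rule sqi_bounded[OF fin znm(2), where C = C]) (rule AE_lebesgue_onI, use C in simp)
  qed
  have sn_sq: "(sn n x)\<^sup>2 = (zn n x - w x)\<^sup>2 + (norm (grad (zn n) x - Dw x))\<^sup>2" for n x
    unfolding sn_def by simp
  have sn_e: "\<bar>zn n x - w x\<bar> \<le> sn n x" and sn_E: "norm (grad (zn n) x - Dw x) \<le> sn n x" for n x
    unfolding sn_def by (rule real_le_rsqrt, simp)+
  have sn_sqi: "sqi ?M (sn n)" for n
    unfolding sqi_def
  proof
    show "sn n \<in> borel_measurable ?M" unfolding sn_def[abs_def] by measurable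
    have "integrable ?M (\<lambda>x. (norm (zn n x - w x))\<^sup>2 + (norm (grad (zn n) x - Dw x))\<^sup>2)"
      using sqi_int[OF sqi_add(2)[OF zn_sqi(1) w_sqi]] sqi_int[OF sqi_add(2)[OF zn_sqi(2) Dw_sqi]]
      by (rule Bochner_Integration.integrable_add)
    then show "integrable ?M (\<lambda>x. (norm (sn n x))\<^sup>2)" by (simp add: sn_sq)
  qed
  have sn_lim: "(\<lambda>n. \<integral>x. (sn n x)\<^sup>2 \<partial>?M) \<longlonglongrightarrow> 0"
    using zn_lim by (simp add: sn_sq)
  have claimA: "integrable ?M (\<lambda>x. (w x * w x) *\<^sub>R grad \<eta> x + (w x * \<eta> x) *\<^sub>R Dw x)
      \<and> integrable ?M (\<lambda>x. (w x * \<eta> x) *\<^sub>R Dw x)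
      \<and> (\<integral>x. (w x * w x) *\<^sub>R grad \<eta> x + (w x * \<eta> x) *\<^sub>R Dw x \<partial>?M) = - (\<integral>x. (w x * \<eta> x) *\<^sub>R Dw x \<partial>?M)"
    if eta: "test_fun \<Omega> \<eta>" for \<eta>
  proof -
    obtain C where C: "C > 0" "\<And>x. x \<in> \<Omega> \<Longrightarrow> \<bar>\<eta> x\<bar> \<le> C \<and> norm (grad \<eta> x) \<le> C"
      using test_bounded[OF eta dom(3)] by blast
    have em[measurable]: "\<eta> \<in> borel_measurable ?M" "grad \<eta> \<in> borel_measurable ?M"
      using test_meas[OF eta dom(1)] by auto
    have pt: "\<And>n. test_fun \<Omega> (\<lambda>x. zn n x * \<eta> x)" by (rule test_mult[OF zn_test eta])
    have gp: "grad (\<lambda>x. zn n x * \<eta> x) x = zn n x *\<^sub>R grad \<eta> x + \<eta> x *\<^sub>R grad (zn n) x" for n x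
      by (rule grad_mult) (use zn_test eta in \<open>auto simp: test_fun_def\<close>)
    have wg: "integrable ?M (\<lambda>x. w x *\<^sub>R grad (\<lambda>x. zn n x * \<eta> x) x) \<and>
        integrable ?M (\<lambda>x. (zn n x * \<eta> x) *\<^sub>R Dw x) \<and>
        (\<integral>x. w x *\<^sub>R grad (\<lambda>x. zn n x * \<eta> x) x \<partial>?M) = - (\<integral>x. (zn n x * \<eta> x) *\<^sub>R Dw x \<partial>?M)" for n
      using w_wg pt[of n] unfolding weak_grad_def by blast
    have L1: "integrable ?M (\<lambda>x. (w x * w x) *\<^sub>R grad \<eta> x + (w x * \<eta> x) *\<^sub>R Dw x) \<and>
      (\<lambda>n. \<integral>x. w x *\<^sub>R grad (\<lambda>x. zn n x * \<eta> x) x \<partial>?M) \<longlonglongrightarrow>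
         (\<integral>x. (w x * w x) *\<^sub>R grad \<eta> x + (w x * \<eta> x) *\<^sub>R Dw x \<partial>?M)"
    proof (rule LIMV[OF _ _ sn_sqi sn_lim])
      show "integrable ?M (\<lambda>x. w x *\<^sub>R grad (\<lambda>x. zn n x * \<eta> x) x)" for n using wg by blast
      show "(\<lambda>x. (w x * w x) *\<^sub>R grad \<eta> x + (w x * \<eta> x) *\<^sub>R Dw x) \<in> borel_measurable ?M" by measurable
      show "sqi ?M (\<lambda>x. (2 * C) * norm (w x))" by (rule sqi_cnorm[OF fin w_sqi])
      show "AE x in ?M. norm (w x *\<^sub>R grad (\<lambda>x. zn n x * \<eta> x) x -
            ((w x * w x) *\<^sub>R grad \<eta> x + (w x * \<eta> x) *\<^sub>R Dw x)) \<le> sn n x * ((2 * C) * norm (w x))" for n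
      proof (rule AE_lebesgue_onI)
        fix x assume x: "x \<in> \<Omega>"
        have "w x *\<^sub>R grad (\<lambda>x. zn n x * \<eta> x) x - ((w x * w x) *\<^sub>R grad \<eta> x + (w x * \<eta> x) *\<^sub>R Dw x)
            = (w x * (zn n x - w x)) *\<^sub>R grad \<eta> x + (w x * \<eta> x) *\<^sub>R (grad (zn n) x - Dw x)"
          unfolding gp by (simp add: algebra_simps)
        also have "norm \<dots> \<le> sn n x * (2 * C * \<bar>w x\<bar>)"
          by (rule bndA) (use C(2)[OF x] sn_e sn_E in auto)
        finally show "norm (w x *\<^sub>R grad (\<lambda>x. zn n x * \<eta> x) x -
            ((w x * w x) *\<^sub>R grad \<eta> x + (w x * \<eta> x) *\<^sub>R Dw x)) \<le> sn n x * ((2 * C) * norm (w x))"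
          by simp
      qed
    qed
    have L2: "integrable ?M (\<lambda>x. (w x * \<eta> x) *\<^sub>R Dw x) \<and>
      (\<lambda>n. \<integral>x. (zn n x * \<eta> x) *\<^sub>R Dw x \<partial>?M) \<longlonglongrightarrow> (\<integral>x. (w x * \<eta> x) *\<^sub>R Dw x \<partial>?M)"
    proof (rule LIMV[OF _ _ sn_sqi sn_lim])
      show "integrable ?M (\<lambda>x. (zn n x * \<eta> x) *\<^sub>R Dw x)" for n using wg by blast
      show "(\<lambda>x. (w x * \<eta> x) *\<^sub>R Dw x) \<in> borel_measurable ?M" by measurable
      show "sqi ?M (\<lambda>x. C * norm (Dw x))" by (rule sqi_cnorm[OF fin Dw_sqi])
      show "AE x in ?M. norm ((zn n x * \<eta> x) *\<^sub>R Dw x - (w x * \<eta> x) *\<^sub>R Dw x) \<le> sn n x * (C * norm (Dw x))" for n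
      proof (rule AE_lebesgue_onI)
        fix x assume x: "x \<in> \<Omega>"
        have "(zn n x * \<eta> x) *\<^sub>R Dw x - (w x * \<eta> x) *\<^sub>R Dw x = ((zn n x - w x) * \<eta> x) *\<^sub>R Dw x"
          by (simp add: algebra_simps)
        also have "norm \<dots> \<le> sn n x * (C * norm (Dw x))"
          by (rule bndB) (use C(2)[OF x] sn_e in auto)
        finally show "norm ((zn n x * \<eta> x) *\<^sub>R Dw x - (w x * \<eta> x) *\<^sub>R Dw x) \<le> sn n x * (C * norm (Dw x))" .
      qed
    qed
    have "(\<lambda>n. \<integral>x. w x *\<^sub>R grad (\<lambda>x. zn n x * \<eta> x) x \<partial>?M) \<longlonglongrightarrow> - (\<integral>x. (w x * \<eta> x) *\<^sub>R Dw x \<partial>?M)"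
      using tendsto_minus[OF L2[THEN conjunct2]] wg by simp
    then have "(\<integral>x. (w x * w x) *\<^sub>R grad \<eta> x + (w x * \<eta> x) *\<^sub>R Dw x \<partial>?M) = - (\<integral>x. (w x * \<eta> x) *\<^sub>R Dw x \<partial>?M)"
      using L1 LIMSEQ_unique by blast
    then show ?thesis using L1 L2 by blast
  qed
  have Om: "AE x in ?M. x \<in> \<Omega>" by (rule AE_lebesgue_onI)
  have sqi1: "sqi ?M (\<lambda>x. 1::real)" by (rule sqi_const[OF fin])
  have claimB: "integrable ?M (\<lambda>x. A x * (D\<phi> x \<bullet> (w x *\<^sub>R grad \<zeta> x + \<zeta> x *\<^sub>R Dw x)))
      \<and> (\<integral>x. A x * (D\<phi> x \<bullet> (w x *\<^sub>R grad \<zeta> x + \<zeta> x *\<^sub>R Dw x)) \<partial>?M) = 0"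
    if z: "test_fun \<Omega> \<zeta>" for \<zeta>
  proof -
    obtain C where C: "C > 0" "\<And>x. x \<in> \<Omega> \<Longrightarrow> \<bar>\<zeta> x\<bar> \<le> C \<and> norm (grad \<zeta> x) \<le> C"
      using test_bounded[OF z dom(3)] by blast
    have zm[measurable]: "\<zeta> \<in> borel_measurable ?M" "grad \<zeta> \<in> borel_measurable ?M"
      using test_meas[OF z dom(1)] by auto
    have pt: "\<And>n. test_fun \<Omega> (\<lambda>x. zn n x * \<zeta> x)" by (rule test_mult[OF zn_test z])
    have pm[measurable]: "grad (\<lambda>x. zn n x * \<zeta> x) \<in> borel_measurable ?M" for n
      using test_meas[OF pt dom(1)] by auto
    have gp: "grad (\<lambda>x. zn n x * \<zeta> x) x = zn n x *\<^sub>R grad \<zeta> x + \<zeta> x *\<^sub>R grad (zn n) x" for n x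
      by (rule grad_mult) (use zn_test z in \<open>auto simp: test_fun_def\<close>)
    have fi: "integrable ?M (\<lambda>x. A x * (D\<phi> x \<bullet> grad (\<lambda>x. zn n x * \<zeta> x) x))" for n
    proof -
      obtain Cn where Cn: "Cn > 0" "\<And>x. x \<in> \<Omega> \<Longrightarrow> \<bar>zn n x * \<zeta> x\<bar> \<le> Cn \<and> norm (grad (\<lambda>x. zn n x * \<zeta> x) x) \<le> Cn"
        using test_bounded[OF pt dom(3)] by blast
      show ?thesis
      proof (rule int_prod[OF _ sqi_cnorm[OF fin Dphi_sqi, of "\<mu> * Cn"] sqi1])
        show "(\<lambda>x. A x * (D\<phi> x \<bullet> grad (\<lambda>x. zn n x * \<zeta> x) x)) \<in> borel_measurable ?M" by measurable
        show "AE x in ?M. norm (A x * (D\<phi> x \<bullet> grad (\<lambda>x. zn n x * \<zeta> x) x)) \<le> \<mu> * Cn * norm (D\<phi> x) * 1"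
          using A_abs Om
        proof eventually_elim
          case (elim x)
          have "\<bar>A x * 1 * (D\<phi> x \<bullet> grad (\<lambda>x. zn n x * \<zeta> x) x)\<bar> \<le> \<mu> * 1 * norm (D\<phi> x) * Cn"
            by (rule bnd4) (use elim Cn(2)[of x] in auto)
          then show ?case by (simp add: algebra_simps)
        qed
      qed
    qed
    have L1: "integrable ?M (\<lambda>x. A x * (D\<phi> x \<bullet> (w x *\<^sub>R grad \<zeta> x + \<zeta> x *\<^sub>R Dw x))) \<and>
      (\<lambda>n. \<integral>x. A x * (D\<phi> x \<bullet> grad (\<lambda>x. zn n x * \<zeta> x) x) \<partial>?M) \<longlonglongrightarrow>
         (\<integral>x. A x * (D\<phi> x \<bullet> (w x *\<^sub>R grad \<zeta> x + \<zeta> x *\<^sub>R Dw x)) \<partial>?M)"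
    proof (rule LIMV[OF fi _ sn_sqi sn_lim])
      show "(\<lambda>x. A x * (D\<phi> x \<bullet> (w x *\<^sub>R grad \<zeta> x + \<zeta> x *\<^sub>R Dw x))) \<in> borel_measurable ?M" by measurable
      show "sqi ?M (\<lambda>x. (2 * \<mu> * C) * norm (D\<phi> x))" by (rule sqi_cnorm[OF fin Dphi_sqi])
      show "AE x in ?M. norm (A x * (D\<phi> x \<bullet> grad (\<lambda>x. zn n x * \<zeta> x) x) -
            A x * (D\<phi> x \<bullet> (w x *\<^sub>R grad \<zeta> x + \<zeta> x *\<^sub>R Dw x))) \<le> sn n x * ((2 * \<mu> * C) * norm (D\<phi> x))" for n
        using A_abs Om
      proof eventually_elim
        case (elim x)
        have v1: "zn n x *\<^sub>R grad \<zeta> x + \<zeta> x *\<^sub>R grad (zn n) x - (w x *\<^sub>R grad \<zeta> x + \<zeta> x *\<^sub>R Dw x)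
            = (zn n x - w x) *\<^sub>R grad \<zeta> x + \<zeta> x *\<^sub>R (grad (zn n) x - Dw x)"
          by (simp add: algebra_simps)
        have "A x * (D\<phi> x \<bullet> grad (\<lambda>x. zn n x * \<zeta> x) x) - A x * (D\<phi> x \<bullet> (w x *\<^sub>R grad \<zeta> x + \<zeta> x *\<^sub>R Dw x))
            = A x * (D\<phi> x \<bullet> ((zn n x - w x) *\<^sub>R grad \<zeta> x + \<zeta> x *\<^sub>R (grad (zn n) x - Dw x)))"
          unfolding gp v1[symmetric] by (simp add: inner_diff_right right_diff_distrib)
        also have "\<bar>\<dots>\<bar> \<le> sn n x * (2 * \<mu> * C * norm (D\<phi> x))"
          by (rule bndC) (use elim C(2)[of x] sn_e sn_E in auto)
        finally show ?case by simp
      qed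
    qed
    have "(\<integral>x. A x * (D\<phi> x \<bullet> grad (\<lambda>x. zn n x * \<zeta> x) x) \<partial>?M) = 0" for n
      using eq_phi[OF pt[of n]] unfolding A_def .
    then have "(\<lambda>n. 0::real) \<longlonglongrightarrow> (\<integral>x. A x * (D\<phi> x \<bullet> (w x *\<^sub>R grad \<zeta> x + \<zeta> x *\<^sub>R Dw x)) \<partial>?M)"
      using L1 by simp
    then have "(\<integral>x. A x * (D\<phi> x \<bullet> (w x *\<^sub>R grad \<zeta> x + \<zeta> x *\<^sub>R Dw x)) \<partial>?M) = 0"
      using LIMSEQ_unique[OF _ tendsto_const] by metis
    then show ?thesis using L1 by blast
  qed
  define D\<psi> where "D\<psi> x = (2 * w x) *\<^sub>R Dw x + Dv x" for x
  have psi_eq: "\<psi> x = (w x)\<^sup>2 + v x" for x unfolding \<psi>_def w_def by simp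
  have wg_psi: "weak_grad \<Omega> \<psi> D\<psi>"
    unfolding weak_grad_def
  proof (intro allI impI)
    fix \<eta> assume eta: "test_fun \<Omega> \<eta>"
    note cA = claimA[OF eta]
    have vw: "integrable ?M (\<lambda>x. v x *\<^sub>R grad \<eta> x)" "integrable ?M (\<lambda>x. \<eta> x *\<^sub>R Dv x)"
      "(\<integral>x. v x *\<^sub>R grad \<eta> x \<partial>?M) = - (\<integral>x. \<eta> x *\<^sub>R Dv x \<partial>?M)"
      using v_wg eta unfolding weak_grad_def by blast+
    let ?g = "\<lambda>x. (w x * w x) *\<^sub>R grad \<eta> x + (w x * \<eta> x) *\<^sub>R Dw x"
    let ?h = "\<lambda>x. (w x * \<eta> x) *\<^sub>R Dw x"
    have e1: "(\<lambda>x. \<psi> x *\<^sub>R grad \<eta> x) = (\<lambda>x. (?g x - ?h x) + v x *\<^sub>R grad \<eta> x)"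
      by (rule ext) (simp add: psi_eq power2_eq_square algebra_simps)
    have e2: "(\<lambda>x. \<eta> x *\<^sub>R D\<psi> x) = (\<lambda>x. 2 *\<^sub>R ?h x + \<eta> x *\<^sub>R Dv x)"
      by (rule ext) (simp add: D\<psi>_def algebra_simps)
    have ig: "integrable ?M ?g" and ih: "integrable ?M ?h" using cA by blast+
    have igh: "integrable ?M (\<lambda>x. ?g x - ?h x)" by (rule Bochner_Integration.integrable_diff[OF ig ih])
    have i1: "integrable ?M (\<lambda>x. (?g x - ?h x) + v x *\<^sub>R grad \<eta> x)"
      by (rule Bochner_Integration.integrable_add[OF igh vw(1)])
    have i2h: "integrable ?M (\<lambda>x. 2 *\<^sub>R ?h x)" using ih by (rule integrable_scaleR_right)
    have i2: "integrable ?M (\<lambda>x. 2 *\<^sub>R ?h x + \<eta> x *\<^sub>R Dv x)"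
      by (rule Bochner_Integration.integrable_add[OF i2h vw(2)])
    have "(\<integral>x. \<psi> x *\<^sub>R grad \<eta> x \<partial>?M) = (\<integral>x. ?g x \<partial>?M) - (\<integral>x. ?h x \<partial>?M) + (\<integral>x. v x *\<^sub>R grad \<eta> x \<partial>?M)"
      unfolding e1 by (subst Bochner_Integration.integral_add[OF igh vw(1)], subst Bochner_Integration.integral_diff[OF ig ih], rule refl)
    also have "\<dots> = - (2 *\<^sub>R (\<integral>x. ?h x \<partial>?M) + (\<integral>x. \<eta> x *\<^sub>R Dv x \<partial>?M))"
      using cA vw(3) by (simp add: algebra_simps scaleR_2)
    also have "\<dots> = - (\<integral>x. \<eta> x *\<^sub>R D\<psi> x \<partial>?M)"
      unfolding e2 by (subst Bochner_Integration.integral_add[OF i2h vw(2)]) (simp only: integral_scaleR_right)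
    finally have eq: "(\<integral>x. \<psi> x *\<^sub>R grad \<eta> x \<partial>?M) = - (\<integral>x. \<eta> x *\<^sub>R D\<psi> x \<partial>?M)" .
    show "integrable ?M (\<lambda>x. \<psi> x *\<^sub>R grad \<eta> x) \<and> integrable ?M (\<lambda>x. \<eta> x *\<^sub>R D\<psi> x) \<and>
        (\<integral>x. \<psi> x *\<^sub>R grad \<eta> x \<partial>?M) = - (\<integral>x. \<eta> x *\<^sub>R D\<psi> x \<partial>?M)"
      using i1 i2 eq unfolding e1 e2 by blast
  qed
  have key: "integrable ?M (\<lambda>x. (A x * (norm (D\<phi> x))\<^sup>2 - 2 * A x * (D\<phi> x \<bullet> D\<phi>0 x)) * \<zeta> x)
     \<and> integrable ?M (\<lambda>x. A x * (norm (D\<phi>0 x))\<^sup>2 * \<zeta> x)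
     \<and> - (\<integral>x. A x * (D\<psi> x \<bullet> grad \<zeta> x) \<partial>?M)
        = (\<integral>x. (A x * (norm (D\<phi> x))\<^sup>2 - 2 * A x * (D\<phi> x \<bullet> D\<phi>0 x)) * \<zeta> x \<partial>?M)
          + 2 * (\<integral>x. w x * A x * (D\<phi>0 x \<bullet> grad \<zeta> x) \<partial>?M)"
    if z: "test_fun \<Omega> \<zeta>" for \<zeta>
  proof -
    obtain C where C: "C > 0" "\<And>x. x \<in> \<Omega> \<Longrightarrow> \<bar>\<zeta> x\<bar> \<le> C \<and> norm (grad \<zeta> x) \<le> C"
      using test_bounded[OF z dom(3)] by blast
    have zm[measurable]: "\<zeta> \<in> borel_measurable ?M" "grad \<zeta> \<in> borel_measurable ?M"
      using test_meas[OF z dom(1)] by auto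
    define P1 where "P1 x = A x * w x * (D\<phi> x \<bullet> grad \<zeta> x)" for x
    define P2 where "P2 x = A x * \<zeta> x * (D\<phi> x \<bullet> Dw x)" for x
    define P3 where "P3 x = w x * A x * (D\<phi>0 x \<bullet> grad \<zeta> x)" for x
    define P4 where "P4 x = A x * (Dv x \<bullet> grad \<zeta> x)" for x
    define P5 where "P5 x = A x * (norm (D\<phi> x))\<^sup>2 * \<zeta> x" for x
    define P6 where "P6 x = A x * (norm (D\<phi>0 x))\<^sup>2 * \<zeta> x" for x
    have I1: "integrable ?M P1"
    proof (rule int_prod[OF _ sqi_cnorm[OF fin w_sqi, of "\<mu> * C"] sqi_norm[OF Dphi_sqi]])
      show "P1 \<in> borel_measurable ?M" unfolding P1_def[abs_def] by measurable
      show "AE x in ?M. norm (P1 x) \<le> \<mu> * C * norm (w x) * norm (D\<phi> x)"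
        using A_abs Om
      proof eventually_elim
        case (elim x)
        have "\<bar>A x * w x * (D\<phi> x \<bullet> grad \<zeta> x)\<bar> \<le> \<mu> * \<bar>w x\<bar> * norm (D\<phi> x) * C"
          by (rule bnd4) (use elim C(2)[of x] in auto)
        then show ?case by (simp add: P1_def algebra_simps)
      qed
    qed
    have I2: "integrable ?M P2"
    proof (rule int_prod[OF _ sqi_cnorm[OF fin Dphi_sqi, of "\<mu> * C"] sqi_norm[OF Dw_sqi]])
      show "P2 \<in> borel_measurable ?M" unfolding P2_def[abs_def] by measurable
      show "AE x in ?M. norm (P2 x) \<le> \<mu> * C * norm (D\<phi> x) * norm (Dw x)"
        using A_abs Om
      proof eventually_elim
        case (elim x)
        have "\<bar>A x * \<zeta> x * (D\<phi> x \<bullet> Dw x)\<bar> \<le> \<mu> * C * norm (D\<phi> x) * norm (Dw x)"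
          by (rule bnd4) (use elim C(2)[of x] in auto)
        then show ?case by (simp add: P2_def algebra_simps)
      qed
    qed
    have I3: "integrable ?M P3"
    proof (rule int_prod[OF _ sqi_cnorm[OF fin w_sqi, of "\<mu> * C0 * C"] sqi1])
      show "P3 \<in> borel_measurable ?M" unfolding P3_def[abs_def] by measurable
      show "AE x in ?M. norm (P3 x) \<le> \<mu> * C0 * C * norm (w x) * 1"
        using A_abs Om
      proof eventually_elim
        case (elim x)
        have "\<bar>A x * w x * (D\<phi>0 x \<bullet> grad \<zeta> x)\<bar> \<le> \<mu> * \<bar>w x\<bar> * C0 * C"
          by (rule bnd4) (use elim C(2)[of x] C0[of x] in auto)
        then show ?case by (simp add: P3_def algebra_simps)
      qed
    qed
    have I4: "integrable ?M P4"
    proof (rule int_prod[OF _ sqi_cnorm[OF fin Dv_sqi, of "\<mu> * C"] sqi1])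
      show "P4 \<in> borel_measurable ?M" unfolding P4_def[abs_def] by measurable
      show "AE x in ?M. norm (P4 x) \<le> \<mu> * C * norm (Dv x) * 1"
        using A_abs Om
      proof eventually_elim
        case (elim x)
        have "\<bar>A x * 1 * (Dv x \<bullet> grad \<zeta> x)\<bar> \<le> \<mu> * 1 * norm (Dv x) * C"
          by (rule bnd4) (use elim C(2)[of x] in auto)
        then show ?case by (simp add: P4_def algebra_simps)
      qed
    qed
    have I5: "integrable ?M P5"
    proof (rule int_prod[OF _ sqi_cnorm[OF fin Dphi_sqi, of "\<mu> * C"] sqi_norm[OF Dphi_sqi]])
      show "P5 \<in> borel_measurable ?M" unfolding P5_def[abs_def] by measurable
      show "AE x in ?M. norm (P5 x) \<le> \<mu> * C * norm (D\<phi> x) * norm (D\<phi> x)"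
        using A_abs Om
      proof eventually_elim
        case (elim x)
        have "\<bar>A x * \<zeta> x * (D\<phi> x \<bullet> D\<phi> x)\<bar> \<le> \<mu> * C * norm (D\<phi> x) * norm (D\<phi> x)"
          by (rule bnd4) (use elim C(2)[of x] in auto)
        then show ?case by (simp add: P5_def power2_norm_eq_inner algebra_simps)
      qed
    qed
    have I6: "integrable ?M P6"
    proof (rule int_prod[OF _ sqi_cnorm[OF fin Dphi0_sqi, of "\<mu> * C"] sqi_norm[OF Dphi0_sqi]])
      show "P6 \<in> borel_measurable ?M" unfolding P6_def[abs_def] by measurable
      show "AE x in ?M. norm (P6 x) \<le> \<mu> * C * norm (D\<phi>0 x) * norm (D\<phi>0 x)"
        using A_abs Om
      proof eventually_elim
        case (elim x)
        have "\<bar>A x * \<zeta> x * (D\<phi>0 x \<bullet> D\<phi>0 x)\<bar> \<le> \<mu> * C * norm (D\<phi>0 x) * norm (D\<phi>0 x)"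
          by (rule bnd4) (use elim C(2)[of x] in auto)
        then show ?case by (simp add: P6_def power2_norm_eq_inner algebra_simps)
      qed
    qed
    have B: "(\<integral>x. P1 x \<partial>?M) + (\<integral>x. P2 x \<partial>?M) = 0"
    proof -
      have "(\<lambda>x. A x * (D\<phi> x \<bullet> (w x *\<^sub>R grad \<zeta> x + \<zeta> x *\<^sub>R Dw x))) = (\<lambda>x. P1 x + P2 x)"
        by (rule ext) (simp add: P1_def P2_def inner_add_right algebra_simps)
      then have "(\<integral>x. P1 x + P2 x \<partial>?M) = 0" using claimB[OF z] by simp
      then show ?thesis by (simp add: Bochner_Integration.integral_add[OF I1 I2])
    qed
    have V: "(\<integral>x. P4 x \<partial>?M) = (\<integral>x. P5 x \<partial>?M)"
      using eq_v[OF z] unfolding P4_def P5_def A_def .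
    have eL: "(\<lambda>x. A x * (D\<psi> x \<bullet> grad \<zeta> x)) = (\<lambda>x. 2 * P1 x - 2 * P3 x + P4 x)"
      by (rule ext) (simp add: P1_def P3_def P4_def D\<psi>_def Dw_def inner_add_left inner_diff_left algebra_simps)
    have eR: "(\<lambda>x. (A x * (norm (D\<phi> x))\<^sup>2 - 2 * A x * (D\<phi> x \<bullet> D\<phi>0 x)) * \<zeta> x) = (\<lambda>x. 2 * P2 x - P5 x)"
      by (rule ext) (simp add: P2_def P5_def Dw_def inner_diff_right power2_norm_eq_inner algebra_simps)
    have I12: "integrable ?M (\<lambda>x. 2 * P1 x)" "integrable ?M (\<lambda>x. 2 * P3 x)" "integrable ?M (\<lambda>x. 2 * P2 x)"
      using I1 I3 I2 by simp_all
    have I13: "integrable ?M (\<lambda>x. 2 * P1 x - 2 * P3 x)"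
      by (rule Bochner_Integration.integrable_diff[OF I12(1,2)])
    have intL: "(\<integral>x. A x * (D\<psi> x \<bullet> grad \<zeta> x) \<partial>?M) = 2 * (\<integral>x. P1 x \<partial>?M) - 2 * (\<integral>x. P3 x \<partial>?M) + (\<integral>x. P4 x \<partial>?M)"
      unfolding eL
      by (subst Bochner_Integration.integral_add[OF I13 I4], subst Bochner_Integration.integral_diff[OF I12(1,2)]) simp
    have IR: "integrable ?M (\<lambda>x. 2 * P2 x - P5 x)"
      by (rule Bochner_Integration.integrable_diff[OF I12(3) I5])
    have intR: "(\<integral>x. 2 * P2 x - P5 x \<partial>?M) = 2 * (\<integral>x. P2 x \<partial>?M) - (\<integral>x. P5 x \<partial>?M)"
      by (subst Bochner_Integration.integral_diff[OF I12(3) I5]) simp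
    have "- (\<integral>x. A x * (D\<psi> x \<bullet> grad \<zeta> x) \<partial>?M)
        = (\<integral>x. (A x * (norm (D\<phi> x))\<^sup>2 - 2 * A x * (D\<phi> x \<bullet> D\<phi>0 x)) * \<zeta> x \<partial>?M)
          + 2 * (\<integral>x. w x * A x * (D\<phi>0 x \<bullet> grad \<zeta> x) \<partial>?M)"
      unfolding intL eR intR using B V by (simp add: P3_def[symmetric])
    moreover have "integrable ?M (\<lambda>x. (A x * (norm (D\<phi> x))\<^sup>2 - 2 * A x * (D\<phi> x \<bullet> D\<phi>0 x)) * \<zeta> x)"
      unfolding eR by (rule IR)
    moreover have "integrable ?M (\<lambda>x. A x * (norm (D\<phi>0 x))\<^sup>2 * \<zeta> x)"
      using I6 unfolding P6_def .
    ultimately show ?thesis by blast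
  qed
  have nonneg: "0 \<le> (\<integral>x. (A x * (norm (D\<phi> x))\<^sup>2 - 2 * A x * (D\<phi> x \<bullet> D\<phi>0 x)) * \<zeta> x \<partial>?M)
       + (\<integral>x. A x * (norm (D\<phi>0 x))\<^sup>2 * \<zeta> x \<partial>?M)"
    if z: "test_fun \<Omega> \<zeta>" and zp: "\<forall>x. 0 \<le> \<zeta> x" for \<zeta>
  proof -
    note k = key[OF z]
    have "(\<integral>x. (A x * (norm (D\<phi> x))\<^sup>2 - 2 * A x * (D\<phi> x \<bullet> D\<phi>0 x)) * \<zeta> x \<partial>?M)
       + (\<integral>x. A x * (norm (D\<phi>0 x))\<^sup>2 * \<zeta> x \<partial>?M)
       = (\<integral>x. (A x * (norm (D\<phi> x))\<^sup>2 - 2 * A x * (D\<phi> x \<bullet> D\<phi>0 x)) * \<zeta> x + A x * (norm (D\<phi>0 x))\<^sup>2 * \<zeta> x \<partial>?M)"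
      using k by (subst Bochner_Integration.integral_add) auto
    also have "\<dots> = (\<integral>x. A x * \<zeta> x * (norm (Dw x))\<^sup>2 \<partial>?M)"
      by (rule Bochner_Integration.integral_cong[OF refl])
        (simp add: Dw_def power2_norm_eq_inner inner_diff_left inner_diff_right inner_commute algebra_simps)
    also have "\<dots> \<ge> 0"
      by (rule integral_nonneg_AE) (use A_AE zp in \<open>auto elim!: eventually_mono\<close>)
    finally show ?thesis by simp
  qed
  show ?thesis
  proof (rule exI[of _ D\<psi>], intro conjI allI impI)
    show "weak_grad \<Omega> \<psi> D\<psi>" by (rule wg_psi)
  next
    fix \<zeta> assume z: "test_fun \<Omega> \<zeta>"
    show "- (\<integral>x. a_of \<sigma> ustar (v x) * (D\<psi> x \<bullet> grad \<zeta> x) \<partial>lebesgue_on \<Omega>)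
        = (\<integral>x. (a_of \<sigma> ustar (v x) * (norm (D\<phi> x))\<^sup>2
                 - 2 * a_of \<sigma> ustar (v x) * (D\<phi> x \<bullet> D\<phi>0 x)) * \<zeta> x \<partial>lebesgue_on \<Omega>)
          + 2 * (\<integral>x. (\<phi> x - \<phi>0 x) * a_of \<sigma> ustar (v x) * (D\<phi>0 x \<bullet> grad \<zeta> x) \<partial>lebesgue_on \<Omega>)"
      using key[OF z] unfolding A_def w_def by blast
  next
    fix \<zeta> assume z: "test_fun \<Omega> \<zeta> \<and> (\<forall>x. 0 \<le> \<zeta> x)"
    have k: "- (\<integral>x. A x * (D\<psi> x \<bullet> grad \<zeta> x) \<partial>?M)
        = (\<integral>x. (A x * (norm (D\<phi> x))\<^sup>2 - 2 * A x * (D\<phi> x \<bullet> D\<phi>0 x)) * \<zeta> x \<partial>?M)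
          + 2 * (\<integral>x. w x * A x * (D\<phi>0 x \<bullet> grad \<zeta> x) \<partial>?M)"
      using key z by blast
    have "(\<integral>x. A x * (D\<psi> x \<bullet> grad \<zeta> x) \<partial>?M)
        \<le> (\<integral>x. A x * (norm (D\<phi>0 x))\<^sup>2 * \<zeta> x \<partial>?M)
          - 2 * (\<integral>x. w x * A x * (D\<phi>0 x \<bullet> grad \<zeta> x) \<partial>?M)"
      using k nonneg z by force
    then show "(\<integral>x. a_of \<sigma> ustar (v x) * (D\<psi> x \<bullet> grad \<zeta> x) \<partial>lebesgue_on \<Omega>)
        \<le> (\<integral>x. a_of \<sigma> ustar (v x) * (norm (D\<phi>0 x))\<^sup>2 * \<zeta> x \<partial>lebesgue_on \<Omega>)
          - 2 * (\<integral>x. (\<phi> x - \<phi>0 x) * a_of \<sigma> ustar (v x) * (D\<phi>0 x \<bullet> grad \<zeta> x) \<partial>lebesgue_on \<Omega>)"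
      unfolding A_def w_def .
  qed
qed

end
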